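(* Let $d>k\geq1$, $\varepsilon\in(0,1)$, $A\succeq0$ symmetric with $\lambda_k>\lambda_{k+1}$, $\beta>0$ with $\lambda_k>2\sqrt\beta\geq\lambda_{k+1}$, $X_0\in\mathrm{St}(d,k)$ with $\cos\theta_k(U_k,X_0)>0$, and ANPM perturbations satisfying for all $t\geq0$: $\|U_{-k}^\top\Xi_t\|_2\leq c(\lambda_k-2\sqrt\beta)\varepsilon$ and $\|U_k^\top\Xi_t\|_2\leq c(\lambda_k-2\sqrt\beta)\cos\theta_k(U_k,X_t)$, $c=1/32$. Let $h_t:=\tan\theta_k(U_k,X_t)$. Then for all $t\geq1$, $$h_t\leq c_1\gamma^th_0+\eta\sum_{s=0}^{t-1}(s+1)\gamma^s(1+h_{t-1-s}),$$ where $\gamma:=\frac{\sqrt\beta}{(1-c)\lambda_k^++c\sqrt\beta}\in[0,1)$, $\eta:=c_2\Delta\varepsilon$, $c_1:=31/15$, $c_2:=2/15$.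
   Context: $A$ has eigenvalues $\lambda_1\geq\dots\geq\lambda_d\geq0$, orthonormal eigenvectors $u_i$; $U_k:=[u_1..u_k]$, $U_{-k}:=[u_{k+1}..u_d]$. $\Delta:=(\lambda_k-2\sqrt\beta)/\lambda_k$; $\lambda_k^+:=\frac{\lambda_k+\sqrt{\lambda_k^2-4\beta}}{2}$. QR: $Y=XR$, $X^\top X=I_k$, $R$ upper triangular, nonnegative diagonal; $\theta_k(U,X):=\arccos\sigma_{\min}(U^\top X)$. ANPM: $(X_1,R_1)=\mathrm{QR}(\tfrac12AX_0+\Xi_0)$; for $t\geq1$, $Y_{t+1}=AX_t-\beta X_{t-1}R_t^{-1}+\Xi_t$, $(X_{t+1},R_{t+1})=\mathrm{QR}(Y_{t+1})$. *)

theory Defs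
  imports Complex_Main "Jordan_Normal_Form.Matrix"
begin

definition vnorm :: "real vec \<Rightarrow> real" where
  "vnorm v = sqrt (v \<bullet> v)"

definition opnorm2 :: "real mat \<Rightarrow> real" where
  "opnorm2 M = Sup {vnorm (M *\<^sub>v x) | x. x \<in> carrier_vec (dim_col M) \<and> vnorm x = 1}"

definition sigma_min :: "real mat \<Rightarrow> real" where
  "sigma_min M = Inf {vnorm (M *\<^sub>v x) | x. x \<in> carrier_vec (dim_col M) \<and> vnorm x = 1}"

definition theta_k :: "real mat \<Rightarrow> real mat \<Rightarrow> real" where
  "theta_k U X = arccos (sigma_min (transpose_mat U * X))"

(* matrix inverse of a square matrix (arbitrary if singular) *)
definition minv :: "real mat \<Rightarrow> real mat" where
  "minv R = (SOME B. B \<in> carrier_mat (dim_row R) (dim_row R) \<and>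
      R * B = 1\<^sub>m (dim_row R) \<and> B * R = 1\<^sub>m (dim_row R))"

definition is_QR :: "nat \<Rightarrow> nat \<Rightarrow> real mat \<Rightarrow> real mat \<Rightarrow> real mat \<Rightarrow> bool" where
  "is_QR d k Y X R \<longleftrightarrow> X \<in> carrier_mat d k \<and> R \<in> carrier_mat k k \<and>
     transpose_mat X * X = 1\<^sub>m k \<and> upper_triangular R \<and>
     (\<forall>i<k. R $$ (i,i) \<ge> 0) \<and> Y = X * R"

definition stiefel :: "nat \<Rightarrow> nat \<Rightarrow> real mat set" where
  "stiefel d k = {X. X \<in> carrier_mat d k \<and> transpose_mat X * X = 1\<^sub>m k}"

(* matrix whose columns are u_(a+1), ..., u_(a+m)  (eigenvectors indexed from 1) *)
definition cols_mat :: "nat \<Rightarrow> (nat \<Rightarrow> real vec) \<Rightarrow> nat \<Rightarrow> nat \<Rightarrow> real mat" where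
  "cols_mat d u a m = mat d m (\<lambda>(i,j). u (a + j + 1) $ i)"

end

theory Submission
  imports Defs "HOL-Analysis.L2_Norm" "Jordan_Normal_Form.Determinant"
begin

fun Pc :: "real \<Rightarrow> real \<Rightarrow> nat \<Rightarrow> real" where
  "Pc l b 0 = 1"
| "Pc l b (Suc 0) = l / 2"
| "Pc l b (Suc (Suc n)) = l * Pc l b (Suc n) - b * Pc l b n"

fun Qc :: "real \<Rightarrow> real \<Rightarrow> nat \<Rightarrow> real" where
  "Qc l b 0 = 1"
| "Qc l b (Suc 0) = l"
| "Qc l b (Suc (Suc n)) = l * Qc l b (Suc n) - b * Qc l b n"

lemma cheb_root:
  fixes l b :: real
  assumes "0 \<le> l" "l\<^sup>2 \<le> 4 * b"
  defines "r \<equiv> Complex (l/2) (sqrt (b - l\<^sup>2/4))"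
  shows "r + cnj r = of_real l" "r * cnj r = of_real b" "cmod r = sqrt b"
proof -
  show "r + cnj r = of_real l" unfolding r_def by (simp add: complex_eq_iff)
  have h: "sqrt (b - l\<^sup>2/4) ^ 2 = b - l\<^sup>2/4" using assms by simp
  show "r * cnj r = of_real b" unfolding r_def using h
    by (simp add: complex_eq_iff power2_eq_square)
  show "cmod r = sqrt b" unfolding r_def cmod_def using h by (simp add: power_divide)
qed

lemma Qc_sum:
  fixes r :: complex
  assumes "r + cnj r = of_real l" "r * cnj r = of_real b"
  shows "of_real (Qc l b n) = (\<Sum>i\<le>n. r ^ i * cnj r ^ (n - i))"
proof -
  define S where "S n = (\<Sum>i\<le>n. r ^ i * cnj r ^ (n - i))" for n
  have S1: "S (Suc n) = r * S n + cnj r ^ Suc n" for n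
  proof -
    have "S (Suc n) = cnj r ^ Suc n + (\<Sum>i\<le>n. r ^ Suc i * cnj r ^ (Suc n - Suc i))"
      unfolding S_def by (subst sum.atMost_Suc_shift) simp
    also have "\<dots> = r * S n + cnj r ^ Suc n" unfolding S_def
      by (simp add: sum_distrib_left mult.assoc)
    finally show ?thesis .
  qed
  have S2: "S (Suc (Suc n)) = (r + cnj r) * S (Suc n) - r * cnj r * S n" for n
    using S1[of "Suc n"] S1[of n] by (simp add: algebra_simps)
  have "of_real (Qc l b n) = S n \<and> of_real (Qc l b (Suc n)) = S (Suc n)"
  proof (induction n)
    case 0 then show ?case using S1[of 0] assms by (simp add: S_def)
  next
    case (Suc n) then show ?case using S2[of n] assms by simp
  qed
  then show ?thesis by (simp add: S_def)
qed

lemma Pc_sum: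
  fixes r :: complex
  assumes "r + cnj r = of_real l" "r * cnj r = of_real b"
  shows "of_real (Pc l b n) = (r ^ n + cnj r ^ n) / 2"
proof -
  have "of_real (Pc l b n) = (r ^ n + cnj r ^ n) / 2 \<and>
        of_real (Pc l b (Suc n)) = (r ^ Suc n + cnj r ^ Suc n) / 2"
  proof (induction n)
    case 0 then show ?case using assms by simp
  next
    case (Suc n)
    have "of_real (Pc l b (Suc (Suc n))) = of_real l * of_real (Pc l b (Suc n)) - of_real b * of_real (Pc l b n)"
      by simp
    also have "\<dots> = (r + cnj r) * ((r ^ Suc n + cnj r ^ Suc n) / 2) - r * cnj r * ((r ^ n + cnj r ^ n) / 2)"
      using Suc.IH by (simp only: assms)
    also have "\<dots> = (r ^ Suc (Suc n) + cnj r ^ Suc (Suc n)) / 2"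
      by (simp add: algebra_simps)
    finally have "of_real (Pc l b (Suc (Suc n))) = (r ^ Suc (Suc n) + cnj r ^ Suc (Suc n)) / 2" .
    then show ?case using Suc.IH by blast
  qed
  then show ?thesis by simp
qed

lemma Qc_bound:
  assumes "0 \<le> l" "l\<^sup>2 \<le> 4 * b"
  shows "\<bar>Qc l b n\<bar> \<le> (real n + 1) * sqrt b ^ n"
proof -
  define r where "r = Complex (l/2) (sqrt (b - l\<^sup>2/4))"
  note R = cheb_root[OF assms, folded r_def]
  have "\<bar>Qc l b n\<bar> = cmod (of_real (Qc l b n))" by simp
  also have "\<dots> = cmod (\<Sum>i\<le>n. r ^ i * cnj r ^ (n - i))" using Qc_sum[OF R(1,2)] by simp
  also have "\<dots> \<le> (\<Sum>i\<le>n. cmod (r ^ i * cnj r ^ (n - i)))" by (rule norm_sum)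
  also have "\<dots> = (\<Sum>i\<le>n. sqrt b ^ n)"
    by (intro sum.cong refl) (simp add: norm_mult norm_power R(3) flip: power_add)
  also have "\<dots> = (real n + 1) * sqrt b ^ n" by simp
  finally show ?thesis .
qed

lemma Pc_bound:
  assumes "0 \<le> l" "l\<^sup>2 \<le> 4 * b"
  shows "\<bar>Pc l b n\<bar> \<le> sqrt b ^ n"
proof -
  define r where "r = Complex (l/2) (sqrt (b - l\<^sup>2/4))"
  note R = cheb_root[OF assms, folded r_def]
  have "\<bar>Pc l b n\<bar> = cmod (of_real (Pc l b n))" by simp
  also have "\<dots> = cmod ((r ^ n + cnj r ^ n) / 2)" by (subst Pc_sum[OF R(1,2)]) (rule refl)
  also have "\<dots> \<le> (cmod (r ^ n) + cmod (cnj r ^ n)) / 2"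
    by (simp add: norm_divide divide_right_mono norm_triangle_ineq)
  also have "\<dots> = sqrt b ^ n" by (simp add: norm_power R(3))
  finally show ?thesis .
qed


lemma duhamel:
  fixes c f :: "nat \<Rightarrow> real"
  assumes c1: "c 1 = l/2 * c 0 + f 0"
    and rec: "\<And>j. 1 \<le> j \<Longrightarrow> j < t \<Longrightarrow> c (Suc j) = l * c j - b * c (j - 1) + f j"
    and n: "n \<le> t"
  shows "c n = Pc l b n * c 0 + (\<Sum>m<n. Qc l b (n - 1 - m) * f m)"
proof -
  have "Suc n \<le> t \<longrightarrow> (c n = Pc l b n * c 0 + (\<Sum>m<n. Qc l b (n - 1 - m) * f m)) \<and>
        (c (Suc n) = Pc l b (Suc n) * c 0 + (\<Sum>m<Suc n. Qc l b (Suc n - 1 - m) * f m))" for n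
  proof (induction n)
    case 0 then show ?case using c1 by simp
  next
    case (Suc n)
    show ?case
    proof
      assume le: "Suc (Suc n) \<le> t"
      with Suc have IH1: "c n = Pc l b n * c 0 + (\<Sum>m<n. Qc l b (n - 1 - m) * f m)"
        and IH2: "c (Suc n) = Pc l b (Suc n) * c 0 + (\<Sum>m<Suc n. Qc l b (n - m) * f m)" by auto
      have r: "c (Suc (Suc n)) = l * c (Suc n) - b * c n + f (Suc n)"
        using rec[of "Suc n"] le by simp
      have sQ: "(\<Sum>m<n. Qc l b (Suc n - m) * f m) =
           l * (\<Sum>m<n. Qc l b (n - m) * f m) - b * (\<Sum>m<n. Qc l b (n - 1 - m) * f m)"
      proof -
        have "(\<Sum>m<n. Qc l b (Suc n - m) * f m) = (\<Sum>m<n. l * (Qc l b (n - m) * f m) - b * (Qc l b (n - 1 - m) * f m))"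
        proof (intro sum.cong refl)
          fix m assume "m \<in> {..<n}"
          then have "Suc n - m = Suc (Suc (n - 1 - m))" "n - m = Suc (n - 1 - m)" by auto
          then show "Qc l b (Suc n - m) * f m = l * (Qc l b (n - m) * f m) - b * (Qc l b (n - 1 - m) * f m)"
            by (simp add: algebra_simps)
        qed
        then show ?thesis by (simp add: sum_subtractf sum_distrib_left)
      qed
      have "c (Suc (Suc n)) = l * (Pc l b (Suc n) * c 0 + (\<Sum>m<n. Qc l b (n - m) * f m) + Qc l b 0 * f n)
            - b * (Pc l b n * c 0 + (\<Sum>m<n. Qc l b (n - 1 - m) * f m)) + f (Suc n)"
        using r IH1 IH2 by simp
      also have "\<dots> = (l * Pc l b (Suc n) - b * Pc l b n) * c 0 + ((l * (\<Sum>m<n. Qc l b (n - m) * f m) - b * (\<Sum>m<n. Qc l b (n - 1 - m) * f m)) + l * f n + f (Suc n))"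
        by (simp only: Qc.simps(1) ring_distribs)
      also have "\<dots> = Pc l b (Suc (Suc n)) * c 0 + ((\<Sum>m<n. Qc l b (Suc n - m) * f m) + Qc l b 1 * f n + Qc l b 0 * f (Suc n))"
        by (simp only: sQ Pc.simps Qc.simps One_nat_def mult_1)
      also have "\<dots> = Pc l b (Suc (Suc n)) * c 0 + (\<Sum>m<Suc (Suc n). Qc l b (Suc (Suc n) - 1 - m) * f m)"
        by simp
      finally show "(c (Suc n) = Pc l b (Suc n) * c 0 + (\<Sum>m<Suc n. Qc l b (Suc n - 1 - m) * f m)) \<and>
        (c (Suc (Suc n)) = Pc l b (Suc (Suc n)) * c 0 + (\<Sum>m<Suc (Suc n). Qc l b (Suc (Suc n) - 1 - m) * f m))"
        using IH2 by simp
    qed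
  qed
  note H = this
  show ?thesis
  proof (cases n)
    case 0 then show ?thesis by simp
  next
    case (Suc m)
    with n have "Suc m \<le> t" by simp
    with H[of m] have "c (Suc m) = Pc l b (Suc m) * c 0 + (\<Sum>x<Suc m. Qc l b (Suc m - 1 - x) * f x)"
      by blast
    then show ?thesis using Suc by blast
  qed
qed


lemma coord_bound:
  fixes c f :: "nat \<Rightarrow> real"
  assumes c1: "c 1 = l/2 * c 0 + f 0"
    and rec: "\<And>j. 1 \<le> j \<Longrightarrow> j < t \<Longrightarrow> c (Suc j) = l * c j - b * c (j - 1) + f j"
    and l: "0 \<le> l" "l\<^sup>2 \<le> 4 * b"
  shows "\<bar>c t\<bar> \<le> sqrt b ^ t * \<bar>c 0\<bar> + (\<Sum>m<t. real (t - m) * sqrt b ^ (t - 1 - m) * \<bar>f m\<bar>)"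
proof -
  have "c t = Pc l b t * c 0 + (\<Sum>m<t. Qc l b (t - 1 - m) * f m)"
    by (rule duhamel[OF c1 rec]) auto
  then have "\<bar>c t\<bar> \<le> \<bar>Pc l b t * c 0\<bar> + \<bar>\<Sum>m<t. Qc l b (t - 1 - m) * f m\<bar>"
    by (simp add: abs_triangle_ineq)
  also have "\<dots> \<le> sqrt b ^ t * \<bar>c 0\<bar> + (\<Sum>m<t. \<bar>Qc l b (t - 1 - m) * f m\<bar>)"
    by (intro add_mono sum_abs) (simp add: abs_mult mult_right_mono Pc_bound[OF l])
  also have "(\<Sum>m<t. \<bar>Qc l b (t - 1 - m) * f m\<bar>) \<le> (\<Sum>m<t. real (t - m) * sqrt b ^ (t - 1 - m) * \<bar>f m\<bar>)"
  proof (intro sum_mono)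
    fix m assume "m \<in> {..<t}"
    then have "real (t - 1 - m) + 1 = real (t - m)" by auto
    then show "\<bar>Qc l b (t - 1 - m) * f m\<bar> \<le> real (t - m) * sqrt b ^ (t - 1 - m) * \<bar>f m\<bar>"
      using Qc_bound[OF l, of "t - 1 - m"] by (simp add: abs_mult mult_right_mono)
  qed
  finally show ?thesis by simp
qed

lemma L2_set_abs: "L2_set (\<lambda>i. \<bar>f i\<bar>) A = L2_set f A"
  unfolding L2_set_def by simp

lemma L2_set_abs_mono:
  assumes "\<And>i. i \<in> A \<Longrightarrow> \<bar>f i\<bar> \<le> g i"
  shows "L2_set f A \<le> L2_set g A"
proof -
  have "L2_set (\<lambda>i. \<bar>f i\<bar>) A \<le> L2_set g A"
    by (rule L2_set_mono) (use assms in auto)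
  then show ?thesis by (simp add: L2_set_abs)
qed

lemma L2_set_sum_le:
  assumes "finite S"
  shows "L2_set (\<lambda>i. \<Sum>m\<in>S. g m i) A \<le> (\<Sum>m\<in>S. L2_set (g m) A)"
  using assms
proof (induction S rule: finite_induct)
  case empty then show ?case by (simp add: L2_set_0')
next
  case (insert x F)
  have "L2_set (\<lambda>i. \<Sum>m\<in>insert x F. g m i) A = L2_set (\<lambda>i. g x i + (\<Sum>m\<in>F. g m i)) A"
    using insert by simp
  also have "\<dots> \<le> L2_set (g x) A + L2_set (\<lambda>i. \<Sum>m\<in>F. g m i) A"
    by (rule L2_set_triangle_ineq)
  also have "\<dots> \<le> L2_set (g x) A + (\<Sum>m\<in>F. L2_set (g m) A)" using insert by simp
  finally show ?case using insert by simp
qed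

lemma b_part:
  fixes C M :: "nat \<Rightarrow> nat \<Rightarrow> real" and lam :: "nat \<Rightarrow> real"
  assumes b0: "0 \<le> b" and lamJ: "\<And>i. i \<in> J \<Longrightarrow> 0 \<le> lam i \<and> (lam i)\<^sup>2 \<le> 4 * b"
    and c1: "\<And>i. i \<in> J \<Longrightarrow> C 1 i = lam i / 2 * C 0 i + M 0 i"
    and rec: "\<And>i j. i \<in> J \<Longrightarrow> 1 \<le> j \<Longrightarrow> j < t \<Longrightarrow> C (Suc j) i = lam i * C j i - b * C (j - 1) i + M j i"
  shows "L2_set (C t) J \<le> sqrt b ^ t * L2_set (C 0) J + (\<Sum>m<t. real (t - m) * sqrt b ^ (t - 1 - m) * L2_set (M m) J)"
proof -
  have "L2_set (C t) J \<le> L2_set (\<lambda>i. sqrt b ^ t * \<bar>C 0 i\<bar> + (\<Sum>m<t. real (t - m) * sqrt b ^ (t - 1 - m) * \<bar>M m i\<bar>)) J"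
  proof (rule L2_set_abs_mono)
    fix i assume i: "i \<in> J"
    show "\<bar>C t i\<bar> \<le> sqrt b ^ t * \<bar>C 0 i\<bar> + (\<Sum>m<t. real (t - m) * sqrt b ^ (t - 1 - m) * \<bar>M m i\<bar>)"
      by (rule coord_bound[of "\<lambda>j. C j i" "lam i" "\<lambda>j. M j i"]) (use i c1 rec lamJ in auto)
  qed
  also have "\<dots> \<le> L2_set (\<lambda>i. sqrt b ^ t * \<bar>C 0 i\<bar>) J + L2_set (\<lambda>i. \<Sum>m<t. real (t - m) * sqrt b ^ (t - 1 - m) * \<bar>M m i\<bar>) J"
    by (rule L2_set_triangle_ineq)
  also have "\<dots> \<le> sqrt b ^ t * L2_set (C 0) J + (\<Sum>m<t. L2_set (\<lambda>i. real (t - m) * sqrt b ^ (t - 1 - m) * \<bar>M m i\<bar>) J)"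
  proof (intro add_mono L2_set_sum_le)
    show "L2_set (\<lambda>i. sqrt b ^ t * \<bar>C 0 i\<bar>) J \<le> sqrt b ^ t * L2_set (C 0) J"
      using L2_set_right_distrib[of "sqrt b ^ t" "\<lambda>i. \<bar>C 0 i\<bar>" J] b0 by (simp add: L2_set_abs)
  qed simp
  also have "(\<Sum>m<t. L2_set (\<lambda>i. real (t - m) * sqrt b ^ (t - 1 - m) * \<bar>M m i\<bar>) J)
      = (\<Sum>m<t. real (t - m) * sqrt b ^ (t - 1 - m) * L2_set (M m) J)"
  proof (intro sum.cong refl)
    fix m
    have "0 \<le> real (t - m) * sqrt b ^ (t - 1 - m)" using b0 by simp
    from L2_set_right_distrib[OF this, of "\<lambda>i. \<bar>M m i\<bar>" J]
    show "L2_set (\<lambda>i. real (t - m) * sqrt b ^ (t - 1 - m) * \<bar>M m i\<bar>) J = real (t - m) * sqrt b ^ (t - 1 - m) * L2_set (M m) J"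
      by (simp add: L2_set_abs mult.assoc)
  qed
  finally show ?thesis .
qed


lemma L2_set_uminus: "L2_set (\<lambda>i. - f i) A = L2_set f A"
  unfolding L2_set_def by simp

lemma L2_set_rev3:
  "L2_set x A - L2_set y A - L2_set z A \<le> L2_set (\<lambda>i. x i + y i + z i) A"
proof -
  have "L2_set x A \<le> L2_set (\<lambda>i. x i + y i + z i) A + L2_set (\<lambda>i. - y i - z i) A"
    using L2_set_triangle_ineq[of "\<lambda>i. x i + y i + z i" "\<lambda>i. - y i - z i" A] by simp
  also have "L2_set (\<lambda>i. - y i - z i) A \<le> L2_set y A + L2_set z A"
    using L2_set_triangle_ineq[of "\<lambda>i. - y i" "\<lambda>i. - z i" A] by (simp add: L2_set_uminus)
  finally show ?thesis by simp
qed

lemma L2_set_scale_lower: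
  assumes "0 \<le> L" "\<And>i. i \<in> A \<Longrightarrow> L \<le> lam i"
  shows "L * L2_set f A \<le> L2_set (\<lambda>i. lam i * f i) A"
proof -
  have "L * L2_set f A = L2_set (\<lambda>i. L * f i) A" using L2_set_right_distrib[OF assms(1), of f A] by simp
  also have "\<dots> \<le> L2_set (\<lambda>i. \<bar>lam i * f i\<bar>) A"
  proof (rule L2_set_abs_mono)
    fix i assume "i \<in> A"
    then have "L \<le> \<bar>lam i\<bar>" using assms by force
    then show "\<bar>L * f i\<bar> \<le> \<bar>lam i * f i\<bar>"
      using assms(1) by (simp add: abs_mult mult_right_mono)
  qed
  finally show ?thesis by (simp add: L2_set_abs)
qed

lemma a_part:
  fixes C M :: "nat \<Rightarrow> nat \<Rightarrow> real" and lam w :: "nat \<Rightarrow> real"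
  assumes L: "0 \<le> L" and lamI: "\<And>i. i \<in> I \<Longrightarrow> L \<le> lam i"
    and b0: "0 \<le> b"
    and c1: "\<And>i. i \<in> I \<Longrightarrow> C 1 i = lam i / 2 * C 0 i + M 0 i"
    and rec: "\<And>i j. i \<in> I \<Longrightarrow> 1 \<le> j \<Longrightarrow> j < t \<Longrightarrow> C (Suc j) i = lam i * C j i - b * C (j - 1) i + M j i"
    and noise: "\<And>j. j < t \<Longrightarrow> L2_set (M j) I \<le> e * L2_set (C j) I"
    and wpos: "\<And>j. 0 < w j"
    and w1: "w 1 = (L / 2 - e) * w 0"
    and w2: "\<And>j. w (Suc (Suc j)) = (L - e) * w (Suc j) - b * w j"
  shows "j < t \<Longrightarrow> w (Suc j) * L2_set (C j) I \<le> w j * L2_set (C (Suc j)) I"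
proof (induction j)
  case 0
  have "L / 2 * L2_set (C 0) I \<le> L2_set (\<lambda>i. lam i / 2 * C 0 i) I"
    using L2_set_scale_lower[of "L/2" I "\<lambda>i. lam i / 2" "C 0"] L lamI by force
  moreover have "L2_set (C 1) I = L2_set (\<lambda>i. lam i / 2 * C 0 i + 0 + M 0 i) I"
    by (rule L2_set_cong) (auto simp: c1[unfolded One_nat_def])
  then have "L2_set (\<lambda>i. lam i / 2 * C 0 i) I - L2_set (\<lambda>i. 0) I - L2_set (M 0) I \<le> L2_set (C 1) I"
    using L2_set_rev3[of "\<lambda>i. lam i / 2 * C 0 i" I "\<lambda>i. 0" "M 0"] by simp
  moreover have "L2_set (M 0) I \<le> e * L2_set (C 0) I" using noise 0 by simp
  ultimately have "(L / 2 - e) * L2_set (C 0) I \<le> L2_set (C 1) I" by (simp add: L2_set_0' algebra_simps)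
  then show ?case using w1 wpos[of 0]
    by (simp add: mult.assoc mult.commute mult.left_commute mult_left_mono)
next
  case (Suc j)
  then have IH: "w (Suc j) * L2_set (C j) I \<le> w j * L2_set (C (Suc j)) I" by simp
  have "L * L2_set (C (Suc j)) I \<le> L2_set (\<lambda>i. lam i * C (Suc j) i) I"
    using L2_set_scale_lower[of L I lam "C (Suc j)"] L lamI by force
  moreover have "L2_set (C (Suc (Suc j))) I = L2_set (\<lambda>i. lam i * C (Suc j) i + - b * C j i + M (Suc j) i) I"
    by (rule L2_set_cong) (use rec[of _ "Suc j"] Suc.prems in auto)
  then have "L2_set (\<lambda>i. lam i * C (Suc j) i) I - L2_set (\<lambda>i. - b * C j i) I - L2_set (M (Suc j)) I \<le> L2_set (C (Suc (Suc j))) I"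
    using L2_set_rev3[of "\<lambda>i. lam i * C (Suc j) i" I "\<lambda>i. - b * C j i" "M (Suc j)"] by simp
  moreover have "L2_set (\<lambda>i. - b * C j i) I = b * L2_set (C j) I"
    using L2_set_right_distrib[OF b0, of "C j" I] by (simp add: L2_set_uminus)
  moreover have "L2_set (M (Suc j)) I \<le> e * L2_set (C (Suc j)) I" using noise Suc.prems by simp
  ultimately have A: "(L - e) * L2_set (C (Suc j)) I - b * L2_set (C j) I \<le> L2_set (C (Suc (Suc j))) I"
    by (simp add: algebra_simps)
  have "w (Suc (Suc j)) * L2_set (C (Suc j)) I = (L - e) * w (Suc j) * L2_set (C (Suc j)) I - b * w j * L2_set (C (Suc j)) I"
    unfolding w2[of j] by (simp add: algebra_simps)
  also have "\<dots> \<le> (L - e) * w (Suc j) * L2_set (C (Suc j)) I - b * w (Suc j) * L2_set (C j) I"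
    using IH b0 mult_left_mono[OF IH b0] by (simp add: algebra_simps)
  also have "\<dots> = w (Suc j) * ((L - e) * L2_set (C (Suc j)) I - b * L2_set (C j) I)"
    by (simp add: algebra_simps)
  also have "\<dots> \<le> w (Suc j) * L2_set (C (Suc (Suc j))) I"
    using A wpos[of "Suc j"] by (simp add: mult_left_mono)
  finally show ?case .
qed

lemma wseq_facts:
  fixes L b :: real
  assumes b: "0 < b" and L: "2 * sqrt b < L"
  defines "e \<equiv> (L - 2 * sqrt b) / 32"
  defines "a \<equiv> L - e"
  defines "s \<equiv> sqrt (a\<^sup>2 - 4 * b)"
  defines "mu \<equiv> (a + s) / 2"
  defines "nu \<equiv> (a - s) / 2"
  defines "Ac \<equiv> (s - e) / (2 * s)"
  defines "Bc \<equiv> (s + e) / (2 * s)"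
  defines "rho \<equiv> (1 - 1/32) * ((L + sqrt (L\<^sup>2 - 4 * b)) / 2) + (1/32) * sqrt b"
  shows "0 < s" "15/31 \<le> Ac" "0 \<le> Bc" "Ac + Bc = 1" "rho \<le> mu" "0 \<le> nu" "nu \<le> mu"
    "mu * nu = b" "mu + nu = a" "sqrt b < rho" "31 * L \<le> 64 * mu" "0 \<le> e"
    "Ac * mu + Bc * nu = L / 2 - e"
proof -
  define sb where "sb = sqrt b"
  have sb: "0 < sb" "sb\<^sup>2 = b" using b by (auto simp: sb_def)
  have L': "2 * sb < L" using L sb_def by simp
  define g where "g = L - 2 * sb"
  have g: "0 < g" using L' g_def by simp
  have e: "e = g / 32" by (simp add: e_def g_def sb_def)
  show "0 \<le> e" using g e by simp
  have a: "a = (31/32) * L + (1/16) * sb" by (simp add: a_def e_def sb_def field_simps)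
  have "a\<^sup>2 - 4 * b = (a - 2 * sb) * (a + 2 * sb)" using sb by (simp add: algebra_simps power2_eq_square)
  also have "a - 2 * sb = (31/32) * g" by (simp add: a g_def algebra_simps)
  then have "(a - 2 * sb) * (a + 2 * sb) = (31/32) * g * (a + 2 * sb)" by simp
  finally have s2: "a\<^sup>2 - 4 * b = (31/32) * g * (a + 2 * sb)" .
  have apos: "0 < a" using a sb L' by simp
  have "0 < 31/32 * g * (a + 2 * sb)" using g apos sb by simp
  then have s2pos: "0 < a\<^sup>2 - 4 * b" by (simp only: s2)
  show spos: "0 < s" using s2pos s_def by simp
  have sq: "s\<^sup>2 = a\<^sup>2 - 4 * b" using s2pos s_def by simp
  have "(31/32) * g \<le> a + 2 * sb" using sb a by (simp add: g_def)
  then have "(31/32) * g * ((31/32) * g) \<le> (31/32) * g * (a + 2 * sb)" using g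
    by (intro mult_left_mono) auto
  then have "((31/32) * g)\<^sup>2 \<le> a\<^sup>2 - 4 * b" unfolding s2 by (simp add: power2_eq_square)
  then have s_ge: "(31/32) * g \<le> s" unfolding s_def by (rule real_le_rsqrt)
  show "15/31 \<le> Ac" unfolding Ac_def using s_ge spos e by (simp add: field_simps)
  show "0 \<le> Bc" unfolding Bc_def using spos e g by simp
  show "Ac + Bc = 1" unfolding Ac_def Bc_def using spos by (simp add: field_simps)
  have s_lt_a: "s < a"
  proof -
    have "s < sqrt (a\<^sup>2)" unfolding s_def using b by (intro real_sqrt_less_mono) simp
    then show ?thesis using apos by simp
  qed
  show nu0: "0 \<le> nu" unfolding nu_def using s_lt_a by simp
  show "nu \<le> mu" unfolding nu_def mu_def using spos by simp
  show "mu * nu = b" unfolding mu_def nu_def using sq by (simp add: field_simps power2_eq_square)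
  show "mu + nu = a" unfolding mu_def nu_def by (simp add: field_simps)
  show "Ac * mu + Bc * nu = L / 2 - e" unfolding Ac_def Bc_def mu_def nu_def a_def using spos
    by (simp add: field_simps)
  define q where "q = sqrt (L\<^sup>2 - 4 * b)"
  have "(2 * sb)\<^sup>2 < L\<^sup>2" using L' sb by (intro power_strict_mono) auto
  moreover have "(2 * sb)\<^sup>2 = 4 * b" using sb(2) by (simp add: power_mult_distrib)
  ultimately have L4: "4 * b \<le> L\<^sup>2" by linarith
  then have q2: "q\<^sup>2 = L\<^sup>2 - 4 * b" unfolding q_def by (intro real_sqrt_pow2) linarith
  have q0: "0 \<le> q" unfolding q_def using L4 by simp
  have "((31/32) * q)\<^sup>2 \<le> a\<^sup>2 - 4 * b"
  proof -
    have "L\<^sup>2 - 4 * b = g * (L + 2 * sb)" using sb by (simp add: g_def algebra_simps power2_eq_square)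
    then have "((31/32) * q)\<^sup>2 = (31/32) * (31/32) * g * (L + 2 * sb)"
      unfolding power_mult_distrib q2 by (simp add: power2_eq_square)
    also have "\<dots> \<le> (31/32) * g * (a + 2 * sb)"
      using g sb by (simp add: a)
    finally show ?thesis using s2 by simp
  qed
  then have "(31/32) * q \<le> s" unfolding s_def by (rule real_le_rsqrt)
  then show "rho \<le> mu" unfolding rho_def mu_def using a
    by (simp add: q_def sb_def)
  have "sqrt b < (L + q) / 2" using L' q0 sb_def by simp
  moreover have rho_q: "rho = (1 - 1/32) * ((L + q) / 2) + 1/32 * sqrt b" by (simp add: rho_def q_def)
  moreover have gen: "\<And>x y::real. x < y \<Longrightarrow> x < (1 - 1/32) * y + 1/32 * x" by (simp add: algebra_simps)
  ultimately show "sqrt b < rho" by metis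
  have "L / 2 \<le> (L + q) / 2" using q0 by simp
  moreover have "\<And>P::real. L / 2 \<le> P \<Longrightarrow> 31 * L \<le> 64 * ((1 - 1/32) * P + 1/32 * sb)"
    using sb by (simp add: algebra_simps)
  ultimately have "31 * L \<le> 64 * rho" unfolding rho_q sb_def by blast
  moreover have "rho \<le> mu" unfolding rho_def mu_def using \<open>(31/32) * q \<le> s\<close> a q_def sb_def by simp
  ultimately show "31 * L \<le> 64 * mu" by simp
qed

lemma wseq_props:
  fixes L b :: real
  assumes b: "0 < b" and L: "2 * sqrt b < L"
  defines "e \<equiv> (L - 2 * sqrt b) / 32"
  defines "a \<equiv> L - e"
  defines "s \<equiv> sqrt (a\<^sup>2 - 4 * b)"
  defines "mu \<equiv> (a + s) / 2"
  defines "nu \<equiv> (a - s) / 2"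
  defines "Ac \<equiv> (s - e) / (2 * s)"
  defines "Bc \<equiv> (s + e) / (2 * s)"
  defines "w \<equiv> (\<lambda>j. Ac * mu ^ j + Bc * nu ^ j)"
  shows "w 0 = 1" "w 1 = (L / 2 - e) * w 0" "\<And>j. w (Suc (Suc j)) = (L - e) * w (Suc j) - b * w j"
    "\<And>j. 0 < w j" "\<And>j. Ac * mu ^ j \<le> w j" "\<And>j. w j \<le> mu ^ j"
proof -
  note F = wseq_facts[OF b L, folded e_def, folded a_def, folded s_def, folded mu_def nu_def Ac_def Bc_def]
  show "w 0 = 1" using F(4) by (simp add: w_def)
  show "w 1 = (L / 2 - e) * w 0" using F(4,13) by (simp add: w_def)
  show "w (Suc (Suc j)) = (L - e) * w (Suc j) - b * w j" for j
  proof -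
    have mm: "mu * mu = a * mu - b" unfolding F(9)[symmetric] F(8)[symmetric] by (simp add: algebra_simps)
    have nn: "nu * nu = a * nu - b" unfolding F(9)[symmetric] F(8)[symmetric] by (simp add: algebra_simps)
    have m: "mu ^ Suc (Suc j) = (L - e) * mu ^ Suc j - b * mu ^ j"
    proof -
      have "mu ^ Suc (Suc j) = mu ^ j * (mu * mu)" by (simp add: algebra_simps)
      also have "\<dots> = a * mu ^ Suc j - b * mu ^ j" unfolding mm by (simp add: algebra_simps)
      finally show ?thesis unfolding a_def .
    qed
    have n: "nu ^ Suc (Suc j) = (L - e) * nu ^ Suc j - b * nu ^ j"
    proof -
      have "nu ^ Suc (Suc j) = nu ^ j * (nu * nu)" by (simp add: algebra_simps)
      also have "\<dots> = a * nu ^ Suc j - b * nu ^ j" unfolding nn by (simp add: algebra_simps)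
      finally show ?thesis unfolding a_def .
    qed
    show ?thesis unfolding w_def m n by (simp add: algebra_simps)
  qed
  have mupos: "0 < mu" using F(5,10) real_sqrt_gt_zero[OF b] by linarith
  show "Ac * mu ^ j \<le> w j" for j using F(3,6) unfolding w_def by simp
  show "0 < w j" for j
  proof -
    have "0 < Ac * mu ^ j" using F(2) mupos by simp
    then show ?thesis using \<open>Ac * mu ^ j \<le> w j\<close> by simp
  qed
  show "w j \<le> mu ^ j" for j
  proof -
    have "nu ^ j \<le> mu ^ j" using F(6,7) by (simp add: power_mono)
    then have "Bc * nu ^ j \<le> Bc * mu ^ j" using F(3) by (simp add: mult_left_mono)
    moreover have "Ac * mu ^ j + Bc * mu ^ j = mu ^ j" using F(4) by (metis distrib_right mult_1)
    ultimately show ?thesis unfolding w_def by linarith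
  qed
qed


lemma core:
  fixes C M :: "nat \<Rightarrow> nat \<Rightarrow> real" and lam h :: "nat \<Rightarrow> real" and I J :: "nat set"
    and b L eps :: real and t :: nat
  assumes b: "0 < b" and L: "2 * sqrt b < L"
    and lamI: "\<And>i. i \<in> I \<Longrightarrow> L \<le> lam i"
    and lamJ: "\<And>i. i \<in> J \<Longrightarrow> 0 \<le> lam i \<and> lam i \<le> 2 * sqrt b"
    and c1: "\<And>i. i \<in> I \<union> J \<Longrightarrow> C 1 i = lam i / 2 * C 0 i + M 0 i"
    and rec: "\<And>i j. i \<in> I \<union> J \<Longrightarrow> 1 \<le> j \<Longrightarrow> j < t \<Longrightarrow> C (Suc j) i = lam i * C j i - b * C (j - 1) i + M j i"
    and nI: "\<And>j. j < t \<Longrightarrow> L2_set (M j) I \<le> (L - 2 * sqrt b) / 32 * L2_set (C j) I"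
    and nJ: "\<And>j. j < t \<Longrightarrow> L2_set (M j) J \<le> (L - 2 * sqrt b) / 32 * eps * (1 + h j) * L2_set (C j) I"
    and h0: "L2_set (C 0) J \<le> h 0 * L2_set (C 0) I"
    and hnn: "\<And>j. 0 \<le> h j" and eps: "0 \<le> eps"
  defines "gamma \<equiv> sqrt b / ((1 - 1/32) * ((L + sqrt (L\<^sup>2 - 4 * b)) / 2) + 1/32 * sqrt b)"
  defines "eta \<equiv> (2/15) * ((L - 2 * sqrt b) / L) * eps"
  shows "0 < L2_set (C 0) I \<Longrightarrow> 0 < L2_set (C t) I"
    and "L2_set (C t) J \<le> ((31/15) * gamma ^ t * h 0
           + eta * (\<Sum>s<t. (real s + 1) * gamma ^ s * (1 + h (t - 1 - s)))) * L2_set (C t) I"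
proof -
  define e where "e = (L - 2 * sqrt b) / 32"
  define a where "a = L - e"
  define s where "s = sqrt (a\<^sup>2 - 4 * b)"
  define mu where "mu = (a + s) / 2"
  define nu where "nu = (a - s) / 2"
  define Ac where "Ac = (s - e) / (2 * s)"
  define Bc where "Bc = (s + e) / (2 * s)"
  define w where "w = (\<lambda>j. Ac * mu ^ j + Bc * nu ^ j)"
  define rho where "rho = (1 - 1/32) * ((L + sqrt (L\<^sup>2 - 4 * b)) / 2) + (1/32) * sqrt b"
  define N where "N = (\<lambda>j. L2_set (C j) I)"
  note F = wseq_facts[OF b L, folded e_def, folded a_def, folded s_def, folded mu_def nu_def Ac_def Bc_def rho_def]
  note W0 = wseq_props[OF b L, folded e_def, folded a_def, folded s_def, folded mu_def nu_def Ac_def Bc_def]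
  have W: "w 0 = 1" "w 1 = (L / 2 - e) * w 0" "\<And>j. w (Suc (Suc j)) = a * w (Suc j) - b * w j"
    "\<And>j. 0 < w j" "\<And>j. Ac * mu ^ j \<le> w j" "\<And>j. w j \<le> mu ^ j"
    unfolding w_def using W0 by auto
  have sb: "0 < sqrt b" using b by simp
  have mupos: "0 < mu" using F(5,10) sb by linarith
  have rhopos: "0 < rho" using F(10) sb by linarith
  have gam: "gamma = sqrt b / rho" unfolding gamma_def rho_def by simp
  have L0: "0 \<le> L" using L sb by linarith
  have c1I: "\<And>i. i \<in> I \<Longrightarrow> C 1 i = lam i / 2 * C 0 i + M 0 i" using c1 by blast
  have recI: "\<And>i j. i \<in> I \<Longrightarrow> 1 \<le> j \<Longrightarrow> j < t \<Longrightarrow> C (Suc j) i = lam i * C j i - b * C (j - 1) i + M j i"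
    using rec by blast
  have nI': "\<And>j. j < t \<Longrightarrow> L2_set (M j) I \<le> e * L2_set (C j) I" using nI unfolding e_def by blast
  have b0: "0 \<le> b" using b by simp
  have step: "w (Suc j) * N j \<le> w j * N (Suc j)" if "j < t" for j
    unfolding N_def
    by (rule a_part[OF L0 lamI b0 c1I recI nI' W(4) W(2) W(3)[unfolded a_def] that])
  have mono: "w n * N r \<le> w r * N n" if "r \<le> n" "n \<le> t" for r n
    using that
  proof (induction n)
    case 0 then show ?case by simp
  next
    case (Suc n)
    show ?case
    proof (cases "r = Suc n")
      case True then show ?thesis by simp
    next
      case False
      with Suc have IH: "w n * N r \<le> w r * N n" and lt: "n < t" by auto
      have "w n * (w (Suc n) * N r) = w (Suc n) * (w n * N r)" by (simp add: algebra_simps)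
      also have "\<dots> \<le> w (Suc n) * (w r * N n)" using IH W(4)[of "Suc n"] by (simp add: mult_left_mono)
      also have "\<dots> = w r * (w (Suc n) * N n)" by (simp add: algebra_simps)
      also have "\<dots> \<le> w r * (w n * N (Suc n))" using step[OF lt] W(4)[of r] by (simp add: mult_left_mono)
      also have "\<dots> = w n * (w r * N (Suc n))" by (simp add: algebra_simps)
      finally show ?thesis using W(4)[of n] by simp
    qed
  qed
  show "0 < L2_set (C 0) I \<Longrightarrow> 0 < L2_set (C t) I"
  proof -
    assume pos: "0 < L2_set (C 0) I"
    have "w t * N 0 \<le> w 0 * N t" using mono[of 0 t] by simp
    moreover have "0 < w t * N 0" using W(4)[of t] pos N_def by simp
    ultimately have "0 < w 0 * N t" by simp
    then show "0 < L2_set (C t) I" using W(1) N_def by simp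
  qed
  have Nr: "N r \<le> (31/15) * N t / mu ^ (t - r)" if "r \<le> t" for r
  proof -
    have Acpos: "0 < Ac" using F(2) by simp
    have "Ac * mu ^ t * N r \<le> w t * N r" using W(5)[of t] N_def by (simp add: mult_right_mono)
    also have "\<dots> \<le> w r * N t" using mono[OF that order.refl] .
    also have "\<dots> \<le> mu ^ r * N t" using W(6)[of r] N_def by (simp add: mult_right_mono)
    finally have A: "Ac * mu ^ t * N r \<le> mu ^ r * N t" .
    have mt: "mu ^ t = mu ^ r * mu ^ (t - r)" using that by (simp flip: power_add)
    have "Ac * mu ^ (t - r) * N r \<le> N t"
      using A mupos unfolding mt by (simp add: algebra_simps)
    then have "N r \<le> N t / (Ac * mu ^ (t - r))"
      using Acpos mupos by (simp add: field_simps)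
    also have "\<dots> \<le> (31/15) * N t / mu ^ (t - r)"
    proof -
      have "N t / (Ac * mu ^ (t - r)) = (1 / Ac) * (N t / mu ^ (t - r))" by simp
      also have "\<dots> \<le> (31/15) * (N t / mu ^ (t - r))"
        using F(2) Acpos mupos N_def by (intro mult_right_mono) (auto simp: field_simps)
      finally show ?thesis by simp
    qed
    finally show ?thesis .
  qed
  have bp: "L2_set (C t) J \<le> sqrt b ^ t * L2_set (C 0) J + (\<Sum>m<t. real (t - m) * sqrt b ^ (t - 1 - m) * L2_set (M m) J)"
  proof (rule b_part)
    show "0 \<le> b" using b by simp
  next
    fix i assume i: "i \<in> J"
    then have l: "0 \<le> lam i" "lam i \<le> 2 * sqrt b" using lamJ by auto
    then have "(lam i)\<^sup>2 \<le> (2 * sqrt b)\<^sup>2" by (intro power_mono) auto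
    then show "0 \<le> lam i \<and> (lam i)\<^sup>2 \<le> 4 * b" using l b by (simp add: power_mult_distrib)
  qed (use c1 rec in auto)
  have gpos: "0 \<le> sqrt b / mu" using sb mupos by simp
  have gle: "sqrt b / mu \<le> gamma" unfolding gam using sb rhopos F(5)
    by (intro divide_left_mono) auto
  have powg: "sqrt b ^ n / mu ^ n \<le> gamma ^ n" for n
    using power_mono[OF gle gpos, of n] by (simp add: power_divide)
  have T0: "sqrt b ^ t * L2_set (C 0) J \<le> (31/15) * gamma ^ t * h 0 * N t"
  proof -
    have "sqrt b ^ t * L2_set (C 0) J \<le> sqrt b ^ t * (h 0 * N 0)"
      using h0 sb N_def by (simp add: mult_left_mono)
    also have "\<dots> \<le> sqrt b ^ t * (h 0 * ((31/15) * N t / mu ^ t))"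
      using Nr[of 0] hnn[of 0] sb by (intro mult_left_mono) auto
    also have "\<dots> = (31/15) * (sqrt b ^ t / mu ^ t) * h 0 * N t" by simp
    also have "\<dots> \<le> (31/15) * gamma ^ t * h 0 * N t"
      using powg[of t] hnn[of 0] N_def by (intro mult_right_mono) auto
    finally show ?thesis .
  qed
  have Tm: "real (t - m) * sqrt b ^ (t - 1 - m) * L2_set (M m) J
        \<le> real (t - m) * gamma ^ (t - 1 - m) * eta * (1 + h m) * N t" if m: "m < t" for m
  proof -
    have ee: "(31/15) * e / mu * eps \<le> eta"
    proof -
      have g0: "0 \<le> L - 2 * sqrt b" using L by simp
      have "(31/15) * e / mu = (31/15) * (L - 2 * sqrt b) / (32 * mu)" by (simp add: e_def)
      also have "\<dots> \<le> (2/15) * ((L - 2 * sqrt b) / L)"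
      proof -
        define g where "g = L - 2 * sqrt b"
        have Lp: "0 < L" using L sb by linarith
        have "g * (31 * L) \<le> g * (64 * mu)" using F(11) g0 unfolding g_def by (intro mult_left_mono) auto
        then have "(31/15) * g / (32 * mu) \<le> (2/15) * (g / L)"
          using Lp mupos by (simp add: field_simps)
        then show ?thesis unfolding g_def .
      qed
      finally have "(31/15) * e / mu * eps \<le> (2/15) * ((L - 2 * sqrt b) / L) * eps"
        using eps by (rule mult_right_mono)
      then show ?thesis unfolding eta_def .
    qed
    have c0: "0 \<le> real (t - m) * sqrt b ^ (t - 1 - m)" using sb by simp
    have "real (t - m) * sqrt b ^ (t - 1 - m) * L2_set (M m) J
        \<le> real (t - m) * sqrt b ^ (t - 1 - m) * (e * eps * (1 + h m) * N m)"
      using nJ[OF m] c0 unfolding N_def e_def by (intro mult_left_mono) auto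
    also have "\<dots> \<le> real (t - m) * sqrt b ^ (t - 1 - m) * (e * eps * (1 + h m) * ((31/15) * N t / mu ^ (t - m)))"
      using Nr[of m] m c0 hnn[of m] eps F(12) by (intro mult_left_mono) auto
    also have "\<dots> = real (t - m) * (sqrt b ^ (t - 1 - m) / mu ^ (t - 1 - m)) * ((31/15) * e / mu * eps) * (1 + h m) * N t"
    proof -
      have "t - m = Suc (t - 1 - m)" using m by simp
      then have "mu ^ (t - m) = mu ^ (t - 1 - m) * mu" by (simp add: power_Suc2)
      then show ?thesis by simp
    qed
    also have "\<dots> \<le> real (t - m) * gamma ^ (t - 1 - m) * eta * (1 + h m) * N t"
    proof -
      have p1: "0 \<le> sqrt b ^ (t - 1 - m) / mu ^ (t - 1 - m)" using sb mupos by simp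
      have p2: "0 \<le> (31/15) * e / mu * eps" using F(12) mupos eps by simp
      have "(sqrt b ^ (t - 1 - m) / mu ^ (t - 1 - m)) * ((31/15) * e / mu * eps) \<le> gamma ^ (t - 1 - m) * eta"
        by (rule mult_mono[OF powg ee]) (use p1 p2 gle gpos in auto)
      then have "real (t - m) * ((sqrt b ^ (t - 1 - m) / mu ^ (t - 1 - m)) * ((31/15) * e / mu * eps)) * ((1 + h m) * N t)
          \<le> real (t - m) * (gamma ^ (t - 1 - m) * eta) * ((1 + h m) * N t)"
        using hnn[of m] N_def by (intro mult_right_mono mult_left_mono) auto
      then show ?thesis by (simp add: mult.assoc)
    qed
    finally show ?thesis .
  qed
  have "L2_set (C t) J \<le> (31/15) * gamma ^ t * h 0 * N t + (\<Sum>m<t. real (t - m) * gamma ^ (t - 1 - m) * eta * (1 + h m) * N t)"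
  proof -
    have S: "(\<Sum>m<t. real (t - m) * sqrt b ^ (t - 1 - m) * L2_set (M m) J)
        \<le> (\<Sum>m<t. real (t - m) * gamma ^ (t - 1 - m) * eta * (1 + h m) * N t)"
      by (rule sum_mono) (rule Tm, simp)
    show ?thesis using bp T0 S by linarith
  qed
  also have "(\<Sum>m<t. real (t - m) * gamma ^ (t - 1 - m) * eta * (1 + h m) * N t)
      = eta * (\<Sum>s<t. (real s + 1) * gamma ^ s * (1 + h (t - 1 - s))) * N t"
  proof -
    have "(\<Sum>m<t. real (t - m) * gamma ^ (t - 1 - m) * eta * (1 + h m) * N t)
        = (\<Sum>s<t. real (t - (t - Suc s)) * gamma ^ (t - 1 - (t - Suc s)) * eta * (1 + h (t - Suc s)) * N t)"
      by (rule sum.nat_diff_reindex[symmetric])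
    also have "\<dots> = (\<Sum>s<t. eta * ((real s + 1) * gamma ^ s * (1 + h (t - 1 - s))) * N t)"
      by (intro sum.cong refl) (auto simp: of_nat_diff)
    finally show ?thesis by (simp add: sum_distrib_left sum_distrib_right)
  qed
  finally show "L2_set (C t) J \<le> ((31/15) * gamma ^ t * h 0
           + eta * (\<Sum>s<t. (real s + 1) * gamma ^ s * (1 + h (t - 1 - s)))) * L2_set (C t) I"
    unfolding N_def by (simp add: algebra_simps)
qed

lemma vnorm_L2: "vnorm v = L2_set (\<lambda>i. v $ i) {0..<dim_vec v}"
  unfolding vnorm_def L2_set_def scalar_prod_def by (simp add: power2_eq_square)

lemma vnorm_nonneg: "0 \<le> vnorm v"
  unfolding vnorm_L2 by simp

lemma vnorm_sq: "(vnorm v)\<^sup>2 = v \<bullet> v"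
proof -
  have "0 \<le> v \<bullet> v" unfolding scalar_prod_def by (auto intro: sum_nonneg)
  then show ?thesis unfolding vnorm_def by simp
qed

lemma L2_set_scale: "L2_set (\<lambda>i. c * f i) A = \<bar>c\<bar> * L2_set f A"
proof -
  have "L2_set (\<lambda>i. c * f i) A = L2_set (\<lambda>i. \<bar>c\<bar> * \<bar>f i\<bar>) A"
    using L2_set_abs[of "\<lambda>i. c * f i" A] by (simp add: abs_mult)
  also have "\<dots> = \<bar>c\<bar> * L2_set (\<lambda>i. \<bar>f i\<bar>) A" by (simp add: L2_set_right_distrib)
  finally show ?thesis by (simp add: L2_set_abs)
qed

lemma vnorm_smult: "vnorm (c \<cdot>\<^sub>v v) = \<bar>c\<bar> * vnorm v"
proof -
  have "vnorm (c \<cdot>\<^sub>v v) = L2_set (\<lambda>i. c * v $ i) {0..<dim_vec v}"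
    unfolding vnorm_L2 by (rule L2_set_cong) auto
  then show ?thesis unfolding vnorm_L2 by (simp add: L2_set_scale)
qed

lemma vnorm_zero_iff: "vnorm v = 0 \<longleftrightarrow> v = 0\<^sub>v (dim_vec v)"
proof
  assume "vnorm v = 0"
  then have "\<forall>i\<in>{0..<dim_vec v}. v $ i = 0" unfolding vnorm_L2 by (simp add: L2_set_eq_0_iff)
  then show "v = 0\<^sub>v (dim_vec v)" by (intro eq_vecI) auto
next
  assume "v = 0\<^sub>v (dim_vec v)"
  then have "vnorm v = vnorm (0\<^sub>v (dim_vec v))" by simp
  also have "\<dots> = 0" unfolding vnorm_L2 by (simp add: L2_set_0')
  finally show "vnorm v = 0" .
qed

lemma vnorm_colsT:
  assumes z: "z \<in> carrier_vec d" and u: "\<And>i. a + 1 \<le> i \<Longrightarrow> i \<le> a + m \<Longrightarrow> u i \<in> carrier_vec d"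
  shows "vnorm (transpose_mat (cols_mat d u a m) *\<^sub>v z) = L2_set (\<lambda>i. u i \<bullet> z) {a+1..a+m}"
proof -
  have e: "(transpose_mat (cols_mat d u a m) *\<^sub>v z) $ j = u (a + j + 1) \<bullet> z" if "j < m" for j
  proof -
    have "col (cols_mat d u a m) j = vec d (\<lambda>i. u (a + j + 1) $ i)"
      unfolding cols_mat_def using that by simp
    also have "\<dots> = u (a + j + 1)" using u[of "a + j + 1"] that by (intro eq_vecI) auto
    moreover have "(transpose_mat (cols_mat d u a m) *\<^sub>v z) $ j = col (cols_mat d u a m) j \<bullet> z"
      using that by (simp add: cols_mat_def)
    ultimately show ?thesis by simp
  qed
  have "vnorm (transpose_mat (cols_mat d u a m) *\<^sub>v z) = L2_set (\<lambda>j. u (a + j + 1) \<bullet> z) {0..<m}"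
  proof -
    have dimeq: "dim_vec (transpose_mat (cols_mat d u a m) *\<^sub>v z) = m" by (simp add: cols_mat_def)
    show ?thesis unfolding vnorm_L2 dimeq by (rule L2_set_cong[OF refl]) (rule e, simp)
  qed
  also have "\<dots> = L2_set (\<lambda>i. u i \<bullet> z) {a+1..a+m}"
  proof -
    have "{a+1..a+m} = (\<lambda>j. a + j + 1) ` {0..<m}"
    proof
      show "(\<lambda>j. a + j + 1) ` {0..<m} \<subseteq> {a+1..a+m}" by auto
      show "{a+1..a+m} \<subseteq> (\<lambda>j. a + j + 1) ` {0..<m}"
      proof
        fix i assume i: "i \<in> {a+1..a+m}"
        then have "i = a + (i - a - 1) + 1" "i - a - 1 \<in> {0..<m}" by auto
        then show "i \<in> (\<lambda>j. a + j + 1) ` {0..<m}" by (rule rev_image_eqI[rotated])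
      qed
    qed
    moreover have "inj_on (\<lambda>j. a + j + 1) {0..<m}" by (auto simp: inj_on_def)
    ultimately show ?thesis unfolding L2_set_def by (simp add: sum.reindex)
  qed
  finally show ?thesis .
qed


lemma col_cols_mat:
  assumes "j < m" "u (a + j + 1) \<in> carrier_vec d"
  shows "col (cols_mat d u a m) j = u (a + j + 1)"
  unfolding cols_mat_def using assms by (intro eq_vecI) auto

lemma parseval:
  assumes u: "\<And>i. 1 \<le> i \<Longrightarrow> i \<le> d \<Longrightarrow> u i \<in> carrier_vec d"
    and on: "\<And>i j. 1 \<le> i \<Longrightarrow> i \<le> d \<Longrightarrow> 1 \<le> j \<Longrightarrow> j \<le> d \<Longrightarrow> u i \<bullet> u j = (if i = j then 1 else 0)"
    and z: "z \<in> carrier_vec d"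
  shows "(L2_set (\<lambda>i. u i \<bullet> z) {1..d})\<^sup>2 = z \<bullet> z"
proof -
  define U where "U = cols_mat d u 0 d"
  have U: "U \<in> carrier_mat d d" and UT: "transpose_mat U \<in> carrier_mat d d"
    unfolding U_def cols_mat_def by auto
  have colU: "col U j = u (j + 1)" if "j < d" for j
    unfolding U_def using col_cols_mat[of j d u 0 d] u[of "j+1"] that by simp
  have "transpose_mat U * U = 1\<^sub>m d"
  proof (rule eq_matI)
    fix i j assume ij: "i < dim_row (1\<^sub>m d)" "j < dim_col (1\<^sub>m d)"
    then have "(transpose_mat U * U) $$ (i, j) = col U i \<bullet> col U j" using U by simp
    also have "\<dots> = u (i + 1) \<bullet> u (j + 1)" using ij colU by simp
    also have "\<dots> = 1\<^sub>m d $$ (i, j)" using on[of "i+1" "j+1"] ij by auto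
    finally show "(transpose_mat U * U) $$ (i, j) = 1\<^sub>m d $$ (i, j)" .
  qed (use U in auto)
  from mat_mult_left_right_inverse[OF UT U this] have UUT: "U * transpose_mat U = 1\<^sub>m d" by simp
  have Tz: "transpose_mat U *\<^sub>v z \<in> carrier_vec d" using UT z by simp
  have "(transpose_mat U *\<^sub>v z) \<bullet> (transpose_mat U *\<^sub>v z) = z \<bullet> (U *\<^sub>v (transpose_mat U *\<^sub>v z))"
    by (rule transpose_vec_mult_scalar[OF U Tz z])
  also have "U *\<^sub>v (transpose_mat U *\<^sub>v z) = z"
    using UUT U UT z by (simp flip: assoc_mult_mat_vec)
  finally have "(transpose_mat U *\<^sub>v z) \<bullet> (transpose_mat U *\<^sub>v z) = z \<bullet> z" .
  moreover have "vnorm (transpose_mat U *\<^sub>v z) = L2_set (\<lambda>i. u i \<bullet> z) {1..d}"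
    unfolding U_def using vnorm_colsT[OF z, of 0 d u] u by simp
  ultimately show ?thesis by (simp flip: vnorm_sq)
qed

lemma stiefel_norm:
  fixes X :: "real mat"
  assumes X: "X \<in> carrier_mat d k" "transpose_mat X * X = 1\<^sub>m k" and y: "y \<in> carrier_vec k"
  shows "(X *\<^sub>v y) \<bullet> (X *\<^sub>v y) = y \<bullet> y"
proof -
  have Xy: "X *\<^sub>v y \<in> carrier_vec d" using X y by simp
  have "(transpose_mat X *\<^sub>v (X *\<^sub>v y)) \<bullet> y = (X *\<^sub>v y) \<bullet> (X *\<^sub>v y)"
    by (rule transpose_vec_mult_scalar[OF X(1) y Xy])
  moreover have "transpose_mat X *\<^sub>v (X *\<^sub>v y) = y"
  proof -
    have "transpose_mat X *\<^sub>v (X *\<^sub>v y) = (transpose_mat X * X) *\<^sub>v y"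
      using X y by (intro assoc_mult_mat_vec[symmetric]) auto
    then show ?thesis using X y by simp
  qed
  ultimately show ?thesis by simp
qed

lemma eig_coord:
  fixes A :: "real mat"
  assumes A: "A \<in> carrier_mat d d" "transpose_mat A = A"
    and ui: "ui \<in> carrier_vec d" "A *\<^sub>v ui = l \<cdot>\<^sub>v ui" and z: "z \<in> carrier_vec d"
  shows "ui \<bullet> (A *\<^sub>v z) = l * (ui \<bullet> z)"
proof -
  have "ui \<bullet> (A *\<^sub>v z) = (transpose_mat A *\<^sub>v ui) \<bullet> z"
    by (rule transpose_vec_mult_scalar[OF A(1) z ui(1), symmetric])
  also have "\<dots> = (l \<cdot>\<^sub>v ui) \<bullet> z" using A ui by simp
  also have "\<dots> = l * (ui \<bullet> z)" using ui z by simp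
  finally show ?thesis .
qed


lemma vec_cs: "dim_vec v = dim_vec w \<Longrightarrow> \<bar>v \<bullet> w\<bar> \<le> vnorm v * vnorm w"
proof -
  assume dv: "dim_vec v = dim_vec w"
  have "\<bar>v \<bullet> w\<bar> = \<bar>\<Sum>i\<in>{0..<dim_vec w}. v $ i * w $ i\<bar>" unfolding scalar_prod_def ..
  also have "\<dots> \<le> (\<Sum>i\<in>{0..<dim_vec w}. \<bar>v $ i\<bar> * \<bar>w $ i\<bar>)" by (rule order_trans[OF sum_abs]) (simp add: abs_mult)
  also have "\<dots> \<le> L2_set (\<lambda>i. v $ i) {0..<dim_vec w} * L2_set (\<lambda>i. w $ i) {0..<dim_vec w}"
    by (rule L2_set_mult_ineq)
  finally show ?thesis unfolding vnorm_L2 dv .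
qed

lemma mat_vec_bound:
  fixes M :: "real mat"
  assumes x: "x \<in> carrier_vec (dim_col M)"
  shows "vnorm (M *\<^sub>v x) \<le> L2_set (\<lambda>i. vnorm (row M i)) {0..<dim_row M} * vnorm x"
proof -
  have "vnorm (M *\<^sub>v x) = L2_set (\<lambda>i. row M i \<bullet> x) {0..<dim_row M}"
    unfolding vnorm_L2 by (rule L2_set_cong) auto
  also have "\<dots> \<le> L2_set (\<lambda>i. vnorm x * vnorm (row M i)) {0..<dim_row M}"
  proof (rule L2_set_abs_mono)
    fix i assume "i \<in> {0..<dim_row M}"
    have "\<bar>row M i \<bullet> x\<bar> \<le> vnorm (row M i) * vnorm x" using x by (intro vec_cs) auto
    then show "\<bar>row M i \<bullet> x\<bar> \<le> vnorm x * vnorm (row M i)" by (simp add: mult.commute)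
  qed
  also have "\<dots> = vnorm x * L2_set (\<lambda>i. vnorm (row M i)) {0..<dim_row M}"
    by (simp add: L2_set_scale vnorm_nonneg)
  finally show ?thesis by (simp add: mult.commute)
qed

lemma vnorm_unit: "0 < n \<Longrightarrow> vnorm (unit_vec n 0 :: real vec) = 1"
  unfolding vnorm_def by simp

lemma normalize_vec:
  fixes x :: "real vec"
  assumes "x \<noteq> 0\<^sub>v (dim_vec x)"
  shows "vnorm ((1 / vnorm x) \<cdot>\<^sub>v x) = 1" "0 < vnorm x"
proof -
  have "vnorm x \<noteq> 0" using assms vnorm_zero_iff by auto
  then show "0 < vnorm x" using vnorm_nonneg[of x] by simp
  then show "vnorm ((1 / vnorm x) \<cdot>\<^sub>v x) = 1" by (simp add: vnorm_smult)
qed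

lemma opnorm_bound:
  fixes M :: "real mat"
  assumes x: "x \<in> carrier_vec (dim_col M)"
  shows "vnorm (M *\<^sub>v x) \<le> opnorm2 M * vnorm x"
proof (cases "x = 0\<^sub>v (dim_col M)")
  case True
  then have "M *\<^sub>v x = 0\<^sub>v (dim_row M)" by (intro eq_vecI) auto
  then show ?thesis using True by (simp add: vnorm_zero_iff[THEN iffD2] vnorm_nonneg)
next
  case False
  then have nz: "x \<noteq> 0\<^sub>v (dim_vec x)" using x by simp
  define y where "y = (1 / vnorm x) \<cdot>\<^sub>v x"
  note N = normalize_vec[OF nz, folded y_def]
  have y: "y \<in> carrier_vec (dim_col M)" using x y_def by simp
  let ?S = "{vnorm (M *\<^sub>v x) | x. x \<in> carrier_vec (dim_col M) \<and> vnorm x = 1}"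
  have bdd: "bdd_above ?S"
  proof (rule bdd_aboveI)
    fix r assume "r \<in> ?S"
    then obtain z where "r = vnorm (M *\<^sub>v z)" "z \<in> carrier_vec (dim_col M)" "vnorm z = 1" by auto
    then show "r \<le> L2_set (\<lambda>i. vnorm (row M i)) {0..<dim_row M}"
      using mat_vec_bound[of z M] by simp
  qed
  have "vnorm (M *\<^sub>v y) \<le> opnorm2 M"
    unfolding opnorm2_def by (rule cSup_upper[OF _ bdd]) (use y N in auto)
  moreover have "M *\<^sub>v y = (1 / vnorm x) \<cdot>\<^sub>v (M *\<^sub>v x)"
    unfolding y_def by (rule mult_mat_vec[of M "dim_row M" "dim_col M"]) (use x in auto)
  ultimately have "vnorm (M *\<^sub>v x) / vnorm x \<le> opnorm2 M"
    by (simp add: vnorm_smult vnorm_nonneg)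
  then show ?thesis using N(2) by (simp add: field_simps)
qed

lemma sigma_lower:
  fixes M :: "real mat"
  assumes x: "x \<in> carrier_vec (dim_col M)"
  shows "sigma_min M * vnorm x \<le> vnorm (M *\<^sub>v x)"
proof (cases "x = 0\<^sub>v (dim_col M)")
  case True
  then have "vnorm x = 0" by (simp add: vnorm_zero_iff[THEN iffD2])
  then show ?thesis by (simp add: vnorm_nonneg)
next
  case False
  then have nz: "x \<noteq> 0\<^sub>v (dim_vec x)" using x by simp
  define y where "y = (1 / vnorm x) \<cdot>\<^sub>v x"
  note N = normalize_vec[OF nz, folded y_def]
  have y: "y \<in> carrier_vec (dim_col M)" using x y_def by simp
  let ?S = "{vnorm (M *\<^sub>v x) | x. x \<in> carrier_vec (dim_col M) \<and> vnorm x = 1}"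
  have bdd: "bdd_below ?S" by (rule bdd_belowI[of _ 0]) (auto simp: vnorm_nonneg)
  have "sigma_min M \<le> vnorm (M *\<^sub>v y)"
    unfolding sigma_min_def by (rule cInf_lower[OF _ bdd]) (use y N in auto)
  moreover have "M *\<^sub>v y = (1 / vnorm x) \<cdot>\<^sub>v (M *\<^sub>v x)"
    unfolding y_def by (rule mult_mat_vec[of M "dim_row M" "dim_col M"]) (use x in auto)
  ultimately have "sigma_min M \<le> vnorm (M *\<^sub>v x) / vnorm x"
    by (simp add: vnorm_smult vnorm_nonneg)
  then show ?thesis using N(2) by (simp add: field_simps)
qed

lemma sigma_ge:
  fixes M :: "real mat"
  assumes n: "0 < dim_col M"
    and H: "\<And>x. x \<in> carrier_vec (dim_col M) \<Longrightarrow> vnorm x = 1 \<Longrightarrow> m \<le> vnorm (M *\<^sub>v x)"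
  shows "m \<le> sigma_min M"
  unfolding sigma_min_def
proof (rule cInf_greatest)
  show "{vnorm (M *\<^sub>v x) | x. x \<in> carrier_vec (dim_col M) \<and> vnorm x = 1} \<noteq> {}"
    using vnorm_unit[OF n] unit_vec_carrier by blast
qed (use H in auto)

lemma sigma_nonneg:
  fixes M :: "real mat"
  assumes n: "0 < dim_col M"
  shows "0 \<le> sigma_min M"
  by (rule sigma_ge[OF n]) (simp add: vnorm_nonneg)


lemma cos_tan_arccos:
  fixes s :: real
  assumes "0 \<le> s" "s \<le> 1"
  shows "cos (arccos s) = s" "tan (arccos s) = sqrt (1 - s\<^sup>2) / s"
  using assms by (auto simp: tan_def sin_arccos cos_arccos)

lemma tan_nonneg_aux:
  fixes s :: real
  assumes "0 \<le> s" "s \<le> 1"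
  shows "0 \<le> sqrt (1 - s\<^sup>2) / s"
proof -
  have "s\<^sup>2 \<le> 1" using assms by (simp add: power_le_one)
  then show ?thesis using assms by simp
qed

lemma tan_facts:
  fixes s a b n :: real
  assumes s: "0 < s" "s \<le> 1" and ab: "0 \<le> a" "0 \<le> b" "0 \<le> n" "a\<^sup>2 + b\<^sup>2 = n\<^sup>2"
    and low: "s * n \<le> a"
  shows "b \<le> sqrt (1 - s\<^sup>2) / s * a" "n \<le> (1 + sqrt (1 - s\<^sup>2) / s) * a"
proof -
  have n_le: "n \<le> a / s" using low s by (simp add: field_simps)
  have "n\<^sup>2 \<le> (a / s)\<^sup>2" using n_le ab by (intro power_mono) auto
  then have "b\<^sup>2 \<le> (a / s)\<^sup>2 - a\<^sup>2" using ab by simp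
  also have "\<dots> = (sqrt (1 - s\<^sup>2) / s * a)\<^sup>2"
  proof -
    have "s\<^sup>2 \<le> 1" using s by (simp add: power_le_one)
    then show ?thesis using s by (simp add: power_mult_distrib power_divide field_simps)
  qed
  finally have "b\<^sup>2 \<le> (sqrt (1 - s\<^sup>2) / s * a)\<^sup>2" .
  moreover have "0 \<le> sqrt (1 - s\<^sup>2) / s * a" by (intro mult_nonneg_nonneg tan_nonneg_aux) (use s ab in auto)
  ultimately show "b \<le> sqrt (1 - s\<^sup>2) / s * a" using power2_le_imp_le by blast
  have "1 \<le> s + sqrt (1 - s\<^sup>2)"
  proof -
    have "s\<^sup>2 \<le> s" using s by (simp add: power2_eq_square mult_left_le_one_le)
    moreover have "1 - s\<^sup>2 \<le> sqrt (1 - s\<^sup>2)"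
    proof -
      have "0 \<le> 1 - s\<^sup>2" "1 - s\<^sup>2 \<le> 1" using s by (auto simp: power_le_one)
      then show ?thesis by (simp add: real_le_rsqrt power2_eq_square mult_left_le_one_le)
    qed
    ultimately show ?thesis by linarith
  qed
  then have "1 / s \<le> 1 + sqrt (1 - s\<^sup>2) / s" using s by (simp add: field_simps)
  then have "a / s \<le> (1 + sqrt (1 - s\<^sup>2) / s) * a" using ab
    by (metis mult.commute mult_right_mono times_divide_eq_right mult_1)
  then show "n \<le> (1 + sqrt (1 - s\<^sup>2) / s) * a" using n_le by linarith
qed

lemma sigma_from_K:
  fixes a b K :: real
  assumes "0 \<le> a" "0 \<le> K" "a\<^sup>2 + b\<^sup>2 = 1" "b \<le> K * a" "0 \<le> b"
  shows "1 / sqrt (1 + K\<^sup>2) \<le> a"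
proof -
  have "b\<^sup>2 \<le> (K * a)\<^sup>2" using assms by (intro power_mono) auto
  then have "1 \<le> a\<^sup>2 * (1 + K\<^sup>2)" using assms by (simp add: power_mult_distrib algebra_simps)
  then have "sqrt 1 \<le> sqrt (a\<^sup>2 * (1 + K\<^sup>2))" by (rule real_sqrt_le_mono)
  then have "1 \<le> a * sqrt (1 + K\<^sup>2)" using assms by (simp add: real_sqrt_mult)
  moreover have "0 < sqrt (1 + K\<^sup>2)" by (simp add: add_pos_nonneg)
  ultimately show ?thesis by (simp add: field_simps)
qed

lemma tan_from_sigma:
  fixes s K :: real
  assumes K: "0 \<le> K" and low: "1 / sqrt (1 + K\<^sup>2) \<le> s" and s1: "s \<le> 1"
  shows "0 < s" "sqrt (1 - s\<^sup>2) / s \<le> K"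
proof -
  define q where "q = sqrt (1 + K\<^sup>2)"
  have q: "0 < q" unfolding q_def by (simp add: add_pos_nonneg)
  have q2: "q\<^sup>2 = 1 + K\<^sup>2" unfolding q_def by (simp add: add_nonneg_nonneg)
  have "0 < 1 / q" using q by simp
  then show sp: "0 < s" using low unfolding q_def[symmetric] by linarith
  have "1 \<le> s * q" using low q unfolding q_def[symmetric] by (simp add: field_simps)
  then have "1\<^sup>2 \<le> (s * q)\<^sup>2" by (intro power_mono) auto
  then have "1 \<le> s\<^sup>2 * (1 + K\<^sup>2)" by (simp add: power_mult_distrib q2)
  then have "1 - s\<^sup>2 \<le> (K * s)\<^sup>2" by (simp add: power_mult_distrib algebra_simps)
  then have "sqrt (1 - s\<^sup>2) \<le> sqrt ((K * s)\<^sup>2)" by (rule real_sqrt_le_mono)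
  also have "\<dots> = K * s" using K sp by simp
  finally show "sqrt (1 - s\<^sup>2) / s \<le> K" using sp by (simp add: field_simps)
qed

locale anpm =
  fixes d k :: nat and eps beta :: real
    and A :: "real mat" and lam :: "nat \<Rightarrow> real" and u :: "nat \<Rightarrow> real vec"
    and X R :: "nat \<Rightarrow> real mat" and Xi :: "nat \<Rightarrow> real mat"
  assumes dk: "d > k" "k \<ge> 1"
    and eps: "0 < eps" "eps < 1"
    and A: "A \<in> carrier_mat d d" "transpose_mat A = A"
    and psd: "\<forall>x \<in> carrier_vec d. x \<bullet> (A *\<^sub>v x) \<ge> 0"
    and eig_sorted: "\<forall>i j. 1 \<le> i \<and> i \<le> j \<and> j \<le> d \<longrightarrow> lam j \<le> lam i"
    and eig_nonneg: "lam d \<ge> 0"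
    and eigvec: "\<forall>i. 1 \<le> i \<and> i \<le> d \<longrightarrow> u i \<in> carrier_vec d \<and> A *\<^sub>v u i = lam i \<cdot>\<^sub>v u i"
    and orthonormal: "\<forall>i j. 1 \<le> i \<and> i \<le> d \<and> 1 \<le> j \<and> j \<le> d \<longrightarrow>
                         u i \<bullet> u j = (if i = j then 1 else 0)"
    and gap: "lam k > lam (k+1)"
    and beta: "beta > 0" "lam k > 2 * sqrt beta" "2 * sqrt beta \<ge> lam (k+1)"
    and X0: "X 0 \<in> stiefel d k" "cos (theta_k (cols_mat d u 0 k) (X 0)) > 0"
    and Xi_carrier: "\<forall>t. Xi t \<in> carrier_mat d k"
    and pert1: "\<forall>t. opnorm2 (transpose_mat (cols_mat d u k (d - k)) * Xi t)
                      \<le> (1/32) * (lam k - 2 * sqrt beta) * eps"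
    and pert2: "\<forall>t. opnorm2 (transpose_mat (cols_mat d u 0 k) * Xi t)
                      \<le> (1/32) * (lam k - 2 * sqrt beta) * cos (theta_k (cols_mat d u 0 k) (X t))"
    and step1: "is_QR d k ((1/2) \<cdot>\<^sub>m (A * X 0) + Xi 0) (X 1) (R 1)"
    and step: "\<forall>t\<ge>1. is_QR d k (A * X t - beta \<cdot>\<^sub>m (X (t - 1) * minv (R t)) + Xi t)
                         (X (t + 1)) (R (t + 1))"
begin

definition "U1 = cols_mat d u 0 k"
definition "U2 = cols_mat d u k (d - k)"
definition "sig t = sigma_min (transpose_mat U1 * X t)"
definition "hh t = tan (theta_k U1 (X t))"
definition "gg = lam k - 2 * sqrt beta"
definition "cI z = L2_set (\<lambda>i. u i \<bullet> z) {1..k}"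
definition "cJ z = L2_set (\<lambda>i. u i \<bullet> z) {k+1..d}"

lemma u_carrier: "1 \<le> i \<Longrightarrow> i \<le> d \<Longrightarrow> u i \<in> carrier_vec d"
  using eigvec by auto

lemma is_QR_D:
  assumes "is_QR d k Y Xm Rm"
  shows "Xm \<in> carrier_mat d k" "Rm \<in> carrier_mat k k" "transpose_mat Xm * Xm = 1\<^sub>m k" "Y = Xm * Rm"
  using assms unfolding is_QR_def by blast+

lemma step_QR: "1 \<le> t \<Longrightarrow> is_QR d k (A * X t - beta \<cdot>\<^sub>m (X (t - 1) * minv (R t)) + Xi t) (X (Suc t)) (R (Suc t))"
  using step by (metis Suc_eq_plus1)

lemma X_props: "X t \<in> carrier_mat d k \<and> transpose_mat (X t) * X t = 1\<^sub>m k"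
proof (cases t)
  case 0 then show ?thesis using X0 unfolding stiefel_def by blast
next
  case (Suc n)
  show ?thesis
  proof (cases n)
    case 0 then show ?thesis using is_QR_D[OF step1] Suc by (metis One_nat_def)
  next
    case (Suc m)
    then have "1 \<le> n" by simp
    from is_QR_D[OF step_QR[OF this]] show ?thesis using \<open>t = Suc n\<close> by blast
  qed
qed

lemma X_carrier: "X t \<in> carrier_mat d k" and X_orth: "transpose_mat (X t) * X t = 1\<^sub>m k"
  using X_props by auto

lemma R_carrier: "1 \<le> t \<Longrightarrow> R t \<in> carrier_mat k k"
proof -
  assume t: "1 \<le> t"
  show ?thesis
  proof (cases "t = 1")
    case True then show ?thesis using is_QR_D(2)[OF step1] by simp
  next
    case False
    then obtain n where n: "t = Suc n" "1 \<le> n" using t by (cases t) auto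
    show ?thesis using is_QR_D(2)[OF step_QR[OF n(2)]] n(1) by simp
  qed
qed

lemma Y1: "X 1 * R 1 = (1/2) \<cdot>\<^sub>m (A * X 0) + Xi 0"
  using is_QR_D(4)[OF step1] by simp

lemma Ystep: "1 \<le> t \<Longrightarrow> X (Suc t) * R (Suc t) = A * X t - beta \<cdot>\<^sub>m (X (t - 1) * minv (R t)) + Xi t"
  using is_QR_D(4)[OF step_QR] by simp

lemma parseval_split:
  assumes z: "z \<in> carrier_vec d"
  shows "(cI z)\<^sup>2 + (cJ z)\<^sup>2 = z \<bullet> z"
proof -
  have "z \<bullet> z = (L2_set (\<lambda>i. u i \<bullet> z) {1..d})\<^sup>2"
    by (rule parseval[OF _ _ z, symmetric]) (use eigvec orthonormal in auto)
  also have "\<dots> = (\<Sum>i\<in>{1..d}. (u i \<bullet> z)\<^sup>2)" unfolding L2_set_def by (simp add: sum_nonneg)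
  also have "{1..d} = {1..k} \<union> {k+1..d}" using dk by auto
  also have "(\<Sum>i\<in>{1..k} \<union> {k+1..d}. (u i \<bullet> z)\<^sup>2) = (\<Sum>i\<in>{1..k}. (u i \<bullet> z)\<^sup>2) + (\<Sum>i\<in>{k+1..d}. (u i \<bullet> z)\<^sup>2)"
    by (rule sum.union_disjoint) auto
  finally show ?thesis unfolding cI_def cJ_def L2_set_def by (simp add: sum_nonneg)
qed

lemma X_dims: "dim_row (X t) = d" "dim_col (X t) = k"
  using X_carrier[of t] by auto

lemma G_carrier: "transpose_mat U1 * X t \<in> carrier_mat k k"
  by (rule mult_carrier_mat[of _ k d]) (use X_carrier[of t] in \<open>auto simp: U1_def cols_mat_def\<close>)

lemma G_vec: "y \<in> carrier_vec k \<Longrightarrow> vnorm ((transpose_mat U1 * X t) *\<^sub>v y) = cI (X t *\<^sub>v y)"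
proof -
  assume y: "y \<in> carrier_vec k"
  have "(transpose_mat U1 * X t) *\<^sub>v y = transpose_mat U1 *\<^sub>v (X t *\<^sub>v y)"
    using X_carrier[of t] y by (intro assoc_mult_mat_vec) (auto simp: U1_def cols_mat_def)
  also have "vnorm \<dots> = cI (X t *\<^sub>v y)" unfolding U1_def cI_def
    using vnorm_colsT[of "X t *\<^sub>v y" d 0 k u] X_carrier[of t] y dk u_carrier by simp
  finally show ?thesis .
qed

lemma Xy_split: "y \<in> carrier_vec k \<Longrightarrow> (cI (X t *\<^sub>v y))\<^sup>2 + (cJ (X t *\<^sub>v y))\<^sup>2 = (vnorm y)\<^sup>2"
proof -
  assume y: "y \<in> carrier_vec k"
  have "(cI (X t *\<^sub>v y))\<^sup>2 + (cJ (X t *\<^sub>v y))\<^sup>2 = (X t *\<^sub>v y) \<bullet> (X t *\<^sub>v y)"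
    using X_carrier[of t] y by (intro parseval_split) auto
  also have "\<dots> = y \<bullet> y" using stiefel_norm[OF X_carrier X_orth y] .
  finally show ?thesis by (simp add: vnorm_sq)
qed

lemma sig_lower: "y \<in> carrier_vec k \<Longrightarrow> sig t * vnorm y \<le> cI (X t *\<^sub>v y)"
  unfolding sig_def using sigma_lower[of y "transpose_mat U1 * X t"] G_vec[of y t] X_dims by simp

lemma sig_range: "0 \<le> sig t" "sig t \<le> 1"
proof -
  have dc: "dim_col (transpose_mat U1 * X t) = k" using X_dims by simp
  show "0 \<le> sig t" unfolding sig_def by (rule sigma_nonneg) (use dc dk in simp)
  define y where "y = (unit_vec k 0 :: real vec)"
  have y: "y \<in> carrier_vec k" "vnorm y = 1" using vnorm_unit[of k] dk y_def by auto
  have "sig t \<le> cI (X t *\<^sub>v y)" using sig_lower[OF y(1), of t] y by simp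
  also have "\<dots> \<le> 1"
  proof -
    have e: "(cI (X t *\<^sub>v y))\<^sup>2 + (cJ (X t *\<^sub>v y))\<^sup>2 = 1" using Xy_split[OF y(1), of t] y(2) by simp
    have "0 \<le> (cJ (X t *\<^sub>v y))\<^sup>2" by simp
    then have "(cI (X t *\<^sub>v y))\<^sup>2 \<le> 1" using e by linarith
    then have "(cI (X t *\<^sub>v y))\<^sup>2 \<le> 1\<^sup>2" by simp
    then show ?thesis by (rule power2_le_imp_le) simp
  qed
  finally show "sig t \<le> 1" .
qed

lemma cos_sig: "cos (theta_k U1 (X t)) = sig t"
  unfolding theta_k_def sig_def[symmetric] by (rule cos_tan_arccos(1)) (rule sig_range)+

lemma hh_sig: "hh t = sqrt (1 - (sig t)\<^sup>2) / sig t"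
  unfolding hh_def theta_k_def sig_def[symmetric] by (rule cos_tan_arccos(2)) (rule sig_range)+

lemma hh_nonneg: "0 \<le> hh t"
  unfolding hh_sig by (rule tan_nonneg_aux) (rule sig_range)+

lemma sig_pos_facts:
  assumes "0 < sig t" "y \<in> carrier_vec k"
  shows "cJ (X t *\<^sub>v y) \<le> hh t * cI (X t *\<^sub>v y)" "vnorm y \<le> (1 + hh t) * cI (X t *\<^sub>v y)"
proof -
  note T = tan_facts[OF assms(1) sig_range(2), of "cI (X t *\<^sub>v y)" "cJ (X t *\<^sub>v y)" "vnorm y"]
  have c: "0 \<le> cI (X t *\<^sub>v y)" "0 \<le> cJ (X t *\<^sub>v y)" unfolding cI_def cJ_def by simp_all
  note T' = T[OF c vnorm_nonneg Xy_split[OF assms(2)] sig_lower[OF assms(2)]]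
  show "cJ (X t *\<^sub>v y) \<le> hh t * cI (X t *\<^sub>v y)" unfolding hh_sig by (rule T'(1))
  show "vnorm y \<le> (1 + hh t) * cI (X t *\<^sub>v y)" unfolding hh_sig by (rule T'(2))
qed

lemma gg_pos: "0 < gg" using beta unfolding gg_def by simp

lemma noise_I: "x \<in> carrier_vec k \<Longrightarrow> cI (Xi t *\<^sub>v x) \<le> gg / 32 * sig t * vnorm x"
proof -
  assume x: "x \<in> carrier_vec k"
  have Xi: "Xi t \<in> carrier_mat d k" using Xi_carrier by simp
  have "cI (Xi t *\<^sub>v x) = vnorm (transpose_mat U1 *\<^sub>v (Xi t *\<^sub>v x))"
    unfolding U1_def cI_def using vnorm_colsT[of "Xi t *\<^sub>v x" d 0 k u] Xi x dk u_carrier by simp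
  also have "transpose_mat U1 *\<^sub>v (Xi t *\<^sub>v x) = (transpose_mat U1 * Xi t) *\<^sub>v x"
    using Xi x by (intro assoc_mult_mat_vec[symmetric]) (auto simp: U1_def cols_mat_def)
  also have "vnorm \<dots> \<le> opnorm2 (transpose_mat U1 * Xi t) * vnorm x"
    by (rule opnorm_bound) (use Xi x in \<open>auto simp: U1_def cols_mat_def\<close>)
  also have "\<dots> \<le> gg / 32 * sig t * vnorm x"
  proof -
    have "opnorm2 (transpose_mat U1 * Xi t) \<le> gg / 32 * sig t"
      using pert2[rule_format, of t] cos_sig[of t] unfolding U1_def gg_def by simp
    then show ?thesis using vnorm_nonneg[of x] by (rule mult_right_mono)
  qed
  finally show ?thesis .
qed

lemma noise_J: "x \<in> carrier_vec k \<Longrightarrow> cJ (Xi t *\<^sub>v x) \<le> gg / 32 * eps * vnorm x"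
proof -
  assume x: "x \<in> carrier_vec k"
  have Xi: "Xi t \<in> carrier_mat d k" using Xi_carrier by simp
  have "cJ (Xi t *\<^sub>v x) = vnorm (transpose_mat U2 *\<^sub>v (Xi t *\<^sub>v x))"
    unfolding U2_def cJ_def using vnorm_colsT[of "Xi t *\<^sub>v x" d k "d - k" u] Xi x dk u_carrier by simp
  also have "transpose_mat U2 *\<^sub>v (Xi t *\<^sub>v x) = (transpose_mat U2 * Xi t) *\<^sub>v x"
    using Xi x by (intro assoc_mult_mat_vec[symmetric]) (auto simp: U2_def cols_mat_def)
  also have "vnorm \<dots> \<le> opnorm2 (transpose_mat U2 * Xi t) * vnorm x"
    by (rule opnorm_bound) (use Xi x in \<open>auto simp: U2_def cols_mat_def\<close>)
  also have "\<dots> \<le> gg / 32 * eps * vnorm x"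
    using pert1 vnorm_nonneg[of x] unfolding U2_def gg_def
    by (intro mult_right_mono) auto
  finally show ?thesis .
qed

definition "inv_upto n \<longleftrightarrow> (\<forall>j. 1 \<le> j \<and> j \<le> n \<longrightarrow>
   minv (R j) \<in> carrier_mat k k \<and> R j * minv (R j) = 1\<^sub>m k \<and> minv (R j) * R j = 1\<^sub>m k)"

definition "gam = sqrt beta / ((1 - 1/32) * ((lam k + sqrt ((lam k)\<^sup>2 - 4 * beta)) / 2) + 1/32 * sqrt beta)"
definition "eta = (2/15) * ((lam k - 2 * sqrt beta) / lam k) * eps"
definition "KK T = (31/15) * gam ^ T * hh 0 + eta * (\<Sum>s<T. (real s + 1) * gam ^ s * (1 + hh (T - 1 - s)))"

fun bw :: "nat \<Rightarrow> real vec \<Rightarrow> nat \<Rightarrow> real vec" where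
  "bw T v 0 = v"
| "bw T v (Suc n) = minv (R (T - 1 - n)) *\<^sub>v bw T v n"

lemma smult_mat_vec:
  fixes M :: "real mat"
  assumes "M \<in> carrier_mat n m" "x \<in> carrier_vec m"
  shows "(c \<cdot>\<^sub>m M) *\<^sub>v x = c \<cdot>\<^sub>v (M *\<^sub>v x)"
  using assms by (intro eq_vecI) (auto simp: scalar_prod_def sum_distrib_left mult.assoc)

lemma bw_props:
  assumes T: "1 \<le> T" and v: "v \<in> carrier_vec k" "v \<noteq> 0\<^sub>v k" and inv: "inv_upto (T - 1)"
  shows "n \<le> T - 1 \<Longrightarrow> bw T v n \<in> carrier_vec k \<and> bw T v n \<noteq> 0\<^sub>v k"
proof (induction n)
  case 0 then show ?case using v by simp
next
  case (Suc n)
  then have IH: "bw T v n \<in> carrier_vec k" "bw T v n \<noteq> 0\<^sub>v k" by auto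
  let ?j = "T - 1 - n"
  have j: "1 \<le> ?j" "?j \<le> T - 1" using Suc.prems by auto
  then have I: "minv (R ?j) \<in> carrier_mat k k" "R ?j * minv (R ?j) = 1\<^sub>m k"
    using inv unfolding inv_upto_def by auto
  have Rc: "R ?j \<in> carrier_mat k k" using R_carrier j by simp
  have c: "bw T v (Suc n) \<in> carrier_vec k" using I IH by simp
  moreover have "bw T v (Suc n) \<noteq> 0\<^sub>v k"
  proof
    assume z: "bw T v (Suc n) = 0\<^sub>v k"
    have e1: "(R ?j * minv (R ?j)) *\<^sub>v bw T v n = bw T v n" unfolding I(2) using IH by simp
    have e2: "(R ?j * minv (R ?j)) *\<^sub>v bw T v n = R ?j *\<^sub>v bw T v (Suc n)" using I(1) IH Rc by simp
    have "bw T v n = R ?j *\<^sub>v bw T v (Suc n)" using e1 e2 by simp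
    also have "\<dots> = 0\<^sub>v k" using z Rc by auto
    finally show False using IH by simp
  qed
  ultimately show ?case by simp
qed

lemma per_vector:
  assumes T: "1 \<le> T" and v: "v \<in> carrier_vec k" "v \<noteq> 0\<^sub>v k" and inv: "inv_upto (T - 1)"
    and sp: "\<And>j. j < T \<Longrightarrow> 0 < sig j"
  shows "0 < cI (X T *\<^sub>v (R T *\<^sub>v v))" "cJ (X T *\<^sub>v (R T *\<^sub>v v)) \<le> KK T * cI (X T *\<^sub>v (R T *\<^sub>v v))"
proof -
  define xs where "xs j = bw T v (T - 1 - j)" for j
  have xsc: "xs j \<in> carrier_vec k" "xs j \<noteq> 0\<^sub>v k" for j
    using bw_props[OF T v inv, of "T - 1 - j"] unfolding xs_def by auto
  have invj: "minv (R j) \<in> carrier_mat k k" "R j * minv (R j) = 1\<^sub>m k" if "1 \<le> j" "j \<le> T - 1" for j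
    using inv that unfolding inv_upto_def by auto
  have xs_prev: "xs (j - 1) = minv (R j) *\<^sub>v xs j" if j: "1 \<le> j" "j \<le> T - 1" for j
  proof -
    have e1: "T - 1 - (j - 1) = Suc (T - 1 - j)" using j by simp
    have e2: "T - 1 - (T - 1 - j) = j" using j by simp
    have "xs (j - 1) = bw T v (Suc (T - 1 - j))" unfolding xs_def e1 ..
    also have "\<dots> = minv (R (T - 1 - (T - 1 - j))) *\<^sub>v bw T v (T - 1 - j)" by (rule bw.simps(2))
    finally show ?thesis unfolding e2 xs_def .
  qed
  have Rxs: "R j *\<^sub>v xs (j - 1) = xs j" if j: "1 \<le> j" "j \<le> T - 1" for j
  proof -
    have Rc: "R j \<in> carrier_mat k k" using R_carrier j by simp
    have "R j *\<^sub>v xs (j - 1) = (R j * minv (R j)) *\<^sub>v xs j"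
      unfolding xs_prev[OF j] using Rc invj[OF j] xsc by (intro assoc_mult_mat_vec[symmetric]) auto
    also have "\<dots> = xs j" unfolding invj(2)[OF j] using xsc by simp
    finally show ?thesis .
  qed
  define Z where "Z j = (if j = 0 then X 0 *\<^sub>v xs 0 else X j *\<^sub>v (R j *\<^sub>v xs (j - 1)))" for j
  have Zx: "Z j = X j *\<^sub>v xs j" if "j \<le> T - 1" for j
  proof (cases "j = 0")
    case True then show ?thesis by (simp add: Z_def)
  next
    case False then show ?thesis using Rxs[of j] that by (simp add: Z_def)
  qed
  have Zc: "Z j \<in> carrier_vec d" for j
  proof (cases "j = 0")
    case True then show ?thesis using mult_mat_vec_carrier[OF X_carrier[of 0] xsc(1)[of 0]] by (simp add: Z_def)
  next
    case False
    then have "R j \<in> carrier_mat k k" using R_carrier by simp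
    then have "R j *\<^sub>v xs (j - 1) \<in> carrier_vec k" using xsc by simp
    then show ?thesis using False mult_mat_vec_carrier[OF X_carrier[of j]] by (simp add: Z_def)
  qed
  have XR: "X j *\<^sub>v (R j *\<^sub>v w) = (X j * R j) *\<^sub>v w" if "1 \<le> j" "w \<in> carrier_vec k" for j w
    using X_carrier[of j] R_carrier[OF that(1)] that(2) by (intro assoc_mult_mat_vec[symmetric]) auto
  have A_X: "(A * X j) *\<^sub>v w = A *\<^sub>v (X j *\<^sub>v w)" if "w \<in> carrier_vec k" for j w
    using A X_carrier[of j] that by (intro assoc_mult_mat_vec) auto
  have Z1: "Z 1 = (1/2) \<cdot>\<^sub>v (A *\<^sub>v Z 0) + Xi 0 *\<^sub>v xs 0"
  proof -
    have Am: "A * X 0 \<in> carrier_mat d k" using A X_carrier[of 0] by simp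
    have "Z 1 = (X 1 * R 1) *\<^sub>v xs 0" unfolding Z_def using XR[of 1 "xs 0"] xsc by simp
    also have "\<dots> = ((1/2) \<cdot>\<^sub>m (A * X 0) + Xi 0) *\<^sub>v xs 0" unfolding Y1 ..
    also have "\<dots> = ((1/2) \<cdot>\<^sub>m (A * X 0)) *\<^sub>v xs 0 + Xi 0 *\<^sub>v xs 0"
      using Am Xi_carrier xsc by (intro add_mult_distrib_mat_vec[of _ d k]) auto
    also have "((1/2) \<cdot>\<^sub>m (A * X 0)) *\<^sub>v xs 0 = (1/2) \<cdot>\<^sub>v ((A * X 0) *\<^sub>v xs 0)"
      using Am xsc by (intro smult_mat_vec) auto
    also have "(A * X 0) *\<^sub>v xs 0 = A *\<^sub>v Z 0" unfolding Z_def using A_X xsc by simp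
    finally show ?thesis .
  qed
  have Zs: "Z (Suc j) = A *\<^sub>v Z j - beta \<cdot>\<^sub>v Z (j - 1) + Xi j *\<^sub>v xs j" if j: "1 \<le> j" "j \<le> T - 1" for j
  proof -
    have Am: "A * X j \<in> carrier_mat d k" using A X_carrier[of j] by simp
    have Bm: "X (j - 1) * minv (R j) \<in> carrier_mat d k" using X_carrier[of "j - 1"] invj[OF j] by simp
    have "Z (Suc j) = (X (Suc j) * R (Suc j)) *\<^sub>v xs j" unfolding Z_def using XR[of "Suc j" "xs j"] xsc by simp
    also have "\<dots> = (A * X j - beta \<cdot>\<^sub>m (X (j - 1) * minv (R j)) + Xi j) *\<^sub>v xs j" using Ystep[OF j(1)] by simp
    also have "\<dots> = (A * X j - beta \<cdot>\<^sub>m (X (j - 1) * minv (R j))) *\<^sub>v xs j + Xi j *\<^sub>v xs j"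
    proof (rule add_mult_distrib_mat_vec[of _ d k])
      show "A * X j - beta \<cdot>\<^sub>m (X (j - 1) * minv (R j)) \<in> carrier_mat d k"
        using Bm by (intro minus_carrier_mat) simp
    qed (use Xi_carrier xsc in auto)
    also have "(A * X j - beta \<cdot>\<^sub>m (X (j - 1) * minv (R j))) *\<^sub>v xs j
        = (A * X j) *\<^sub>v xs j - (beta \<cdot>\<^sub>m (X (j - 1) * minv (R j))) *\<^sub>v xs j"
      using Am Bm xsc by (intro minus_mult_distrib_mat_vec[of _ d k]) auto
    also have "(beta \<cdot>\<^sub>m (X (j - 1) * minv (R j))) *\<^sub>v xs j = beta \<cdot>\<^sub>v ((X (j - 1) * minv (R j)) *\<^sub>v xs j)"
      using Bm xsc by (intro smult_mat_vec) auto
    also have "(X (j - 1) * minv (R j)) *\<^sub>v xs j = X (j - 1) *\<^sub>v (minv (R j) *\<^sub>v xs j)"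
      using X_carrier[of "j - 1"] invj[OF j] xsc by (intro assoc_mult_mat_vec) auto
    also have "\<dots> = Z (j - 1)" using Zx[of "j - 1"] xs_prev[OF j] j by simp
    also have "(A * X j) *\<^sub>v xs j = A *\<^sub>v Z j" using A_X xsc Zx[OF j(2)] by simp
    finally show ?thesis .
  qed
  define C where "C j i = u i \<bullet> Z j" for j i
  define M where "M j i = u i \<bullet> (Xi j *\<^sub>v xs j)" for j i
  have Xic: "Xi j *\<^sub>v xs j \<in> carrier_vec d" for j
    using mult_mat_vec_carrier[OF Xi_carrier[rule_format, of j] xsc(1)[of j]] .
  have AZ: "u i \<bullet> (A *\<^sub>v Z j) = lam i * C j i" if "1 \<le> i" "i \<le> d" for i j
    unfolding C_def using eig_coord[OF A] eigvec that Zc by auto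
  have c1: "C 1 i = lam i / 2 * C 0 i + M 0 i" if "i \<in> {1..k} \<union> {k+1..d}" for i
  proof -
    have i: "1 \<le> i" "i \<le> d" using that dk by auto
    have ui: "u i \<in> carrier_vec d" using u_carrier i by simp
    have "C 1 i = u i \<bullet> ((1/2) \<cdot>\<^sub>v (A *\<^sub>v Z 0)) + u i \<bullet> (Xi 0 *\<^sub>v xs 0)"
      unfolding C_def Z1 using ui A Zc Xic by (intro scalar_prod_add_distrib[of _ d]) auto
    also have "u i \<bullet> ((1/2) \<cdot>\<^sub>v (A *\<^sub>v Z 0)) = (1/2) * (u i \<bullet> (A *\<^sub>v Z 0))"
      using ui A Zc by (intro scalar_prod_smult_distrib[of _ d]) auto
    finally show ?thesis using AZ[OF i] unfolding M_def by simp
  qed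
  have rec: "C (Suc j) i = lam i * C j i - beta * C (j - 1) i + M j i"
    if "i \<in> {1..k} \<union> {k+1..d}" "1 \<le> j" "j < T" for i j
  proof -
    have i: "1 \<le> i" "i \<le> d" using that dk by auto
    have j: "1 \<le> j" "j \<le> T - 1" using that by auto
    have ui: "u i \<in> carrier_vec d" using u_carrier i by simp
    have v1: "A *\<^sub>v Z j \<in> carrier_vec d" using A Zc by simp
    have v2: "beta \<cdot>\<^sub>v Z (j - 1) \<in> carrier_vec d" using Zc by simp
    have "C (Suc j) i = u i \<bullet> (A *\<^sub>v Z j - beta \<cdot>\<^sub>v Z (j - 1)) + u i \<bullet> (Xi j *\<^sub>v xs j)"
      unfolding C_def Zs[OF j] using ui v1 v2 Xic by (intro scalar_prod_add_distrib[of _ d]) auto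
    also have "u i \<bullet> (A *\<^sub>v Z j - beta \<cdot>\<^sub>v Z (j - 1)) = u i \<bullet> (A *\<^sub>v Z j) - u i \<bullet> (beta \<cdot>\<^sub>v Z (j - 1))"
      using ui v1 v2 by (intro scalar_prod_minus_distrib[of _ d]) auto
    also have "u i \<bullet> (beta \<cdot>\<^sub>v Z (j - 1)) = beta * (u i \<bullet> Z (j - 1))"
      using ui Zc by (intro scalar_prod_smult_distrib[of _ d]) auto
    finally show ?thesis using AZ[OF i] unfolding M_def C_def by simp
  qed
  have LI: "L2_set (C j) {1..k} = cI (Z j)" for j unfolding C_def cI_def ..
  have LJ: "L2_set (C j) {k+1..d} = cJ (Z j)" for j unfolding C_def cJ_def ..
  have MI: "L2_set (M j) {1..k} = cI (Xi j *\<^sub>v xs j)" for j unfolding M_def cI_def ..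
  have MJ: "L2_set (M j) {k+1..d} = cJ (Xi j *\<^sub>v xs j)" for j unfolding M_def cJ_def ..
  have nI: "L2_set (M j) {1..k} \<le> (lam k - 2 * sqrt beta) / 32 * L2_set (C j) {1..k}" if "j < T" for j
  proof -
    have jT: "j \<le> T - 1" using that by simp
    have "cI (Xi j *\<^sub>v xs j) \<le> gg / 32 * sig j * vnorm (xs j)" by (rule noise_I[OF xsc(1)])
    also have "\<dots> = gg / 32 * (sig j * vnorm (xs j))" by simp
    also have "\<dots> \<le> gg / 32 * cI (X j *\<^sub>v xs j)"
      using sig_lower[OF xsc(1), of j] gg_pos by (intro mult_left_mono) auto
    finally show ?thesis unfolding MI LI Zx[OF jT] gg_def by simp
  qed
  have nJ: "L2_set (M j) {k+1..d} \<le> (lam k - 2 * sqrt beta) / 32 * eps * (1 + hh j) * L2_set (C j) {1..k}" if "j < T" for j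
  proof -
    have jT: "j \<le> T - 1" using that by simp
    have "cJ (Xi j *\<^sub>v xs j) \<le> gg / 32 * eps * vnorm (xs j)" by (rule noise_J[OF xsc(1)])
    also have "\<dots> \<le> gg / 32 * eps * ((1 + hh j) * cI (X j *\<^sub>v xs j))"
      using sig_pos_facts(2)[OF sp[OF that] xsc(1)] gg_pos eps by (intro mult_left_mono) auto
    finally show ?thesis unfolding MJ LI Zx[OF jT] gg_def by (simp add: mult.assoc)
  qed
  have h0: "L2_set (C 0) {k+1..d} \<le> hh 0 * L2_set (C 0) {1..k}"
    unfolding LI LJ using Zx[of 0] sig_pos_facts(1)[OF sp xsc(1), of 0] T by simp
  have lamI: "lam k \<le> lam i" if "i \<in> {1..k}" for i using eig_sorted that dk by auto
  have lamJ: "0 \<le> lam i \<and> lam i \<le> 2 * sqrt beta" if "i \<in> {k+1..d}" for i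
  proof -
    have "lam d \<le> lam i" "lam i \<le> lam (k+1)" using eig_sorted that dk by auto
    then show ?thesis using eig_nonneg beta by auto
  qed
  have eps0: "0 \<le> eps" using eps by simp
  note CO = core[of beta "lam k" "{1..k}" lam "{k+1..d}" C M T eps hh]
  have ZT: "Z T = X T *\<^sub>v (R T *\<^sub>v v)" unfolding Z_def xs_def using T by simp
  have pos0: "0 < L2_set (C 0) {1..k}"
  proof -
    have "0 < vnorm (xs 0)" using normalize_vec(2)[of "xs 0"] xsc[of 0] by simp
    then have "0 < sig 0 * vnorm (xs 0)" using sp[of 0] T by simp
    also have "\<dots> \<le> cI (X 0 *\<^sub>v xs 0)" by (rule sig_lower[OF xsc(1)])
    finally show ?thesis unfolding LI Z_def by simp
  qed
  have CO1: "0 < L2_set (C T) {1..k}"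
    using CO(1) beta(1,2) lamI lamJ c1 rec nI nJ h0 hh_nonneg eps0 pos0 by blast
  have CO2: "L2_set (C T) {k+1..d} \<le> ((31/15) * (sqrt beta / ((1 - 1/32) * ((lam k + sqrt ((lam k)\<^sup>2 - 4 * beta)) / 2) + 1/32 * sqrt beta)) ^ T * hh 0
           + (2/15) * ((lam k - 2 * sqrt beta) / lam k) * eps * (\<Sum>s<T. (real s + 1) * (sqrt beta / ((1 - 1/32) * ((lam k + sqrt ((lam k)\<^sup>2 - 4 * beta)) / 2) + 1/32 * sqrt beta)) ^ s * (1 + hh (T - 1 - s)))) * L2_set (C T) {1..k}"
    using CO(2) beta(1,2) lamI lamJ c1 rec nI nJ h0 hh_nonneg eps0 by blast
  show "0 < cI (X T *\<^sub>v (R T *\<^sub>v v))" using CO1 unfolding LI ZT .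
  show "cJ (X T *\<^sub>v (R T *\<^sub>v v)) \<le> KK T * cI (X T *\<^sub>v (R T *\<^sub>v v))"
    using CO2 unfolding LI LJ ZT KK_def gam_def eta_def .
qed

lemma gam_facts: "0 \<le> gam" "gam < 1"
proof -
  note F = wseq_facts[OF beta(1) beta(2)]
  define rho where "rho = (1 - 1/32) * ((lam k + sqrt ((lam k)\<^sup>2 - 4 * beta)) / 2) + (1/32) * sqrt beta"
  have r: "sqrt beta < rho" using F(10) unfolding rho_def by simp
  have sb: "0 < sqrt beta" using beta by simp
  have g: "gam = sqrt beta / rho" unfolding gam_def rho_def by simp
  have rp: "0 < rho" using r sb by linarith
  show "0 \<le> gam" unfolding g using rp sb by simp
  show "gam < 1" unfolding g using r rp by simp
qed

lemma eta_nonneg: "0 \<le> eta"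
proof -
  have "0 < lam k" using beta by (smt (verit) real_sqrt_ge_zero)
  then show ?thesis unfolding eta_def using beta eps by simp
qed

lemma KK_nonneg: "0 \<le> KK T"
  unfolding KK_def using gam_facts eta_nonneg hh_nonneg
  by (intro add_nonneg_nonneg mult_nonneg_nonneg sum_nonneg) auto

lemma inv_exists:
  fixes Rm :: "real mat"
  assumes Rm: "Rm \<in> carrier_mat n n" and ker: "\<And>v. v \<in> carrier_vec n \<Longrightarrow> v \<noteq> 0\<^sub>v n \<Longrightarrow> Rm *\<^sub>v v \<noteq> 0\<^sub>v n"
  shows "minv Rm \<in> carrier_mat n n \<and> Rm * minv Rm = 1\<^sub>m n \<and> minv Rm * Rm = 1\<^sub>m n"
proof -
  have "det Rm \<noteq> 0" using det_0_iff_vec_prod_zero_field[OF Rm] ker by auto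
  from det_non_zero_imp_unit[OF Rm this, of "()"]
  obtain B where B: "B \<in> carrier_mat n n" "B * Rm = 1\<^sub>m n" unfolding Units_def ring_mat_def by auto
  have "Rm * B = 1\<^sub>m n" by (rule mat_mult_left_right_inverse[OF B(1) Rm B(2)])
  then have ex: "\<exists>B. B \<in> carrier_mat (dim_row Rm) (dim_row Rm) \<and> Rm * B = 1\<^sub>m (dim_row Rm) \<and> B * Rm = 1\<^sub>m (dim_row Rm)"
    using B Rm by auto
  show ?thesis using someI_ex[OF ex] Rm unfolding minv_def by auto
qed

lemma cI_zero: "cI (0\<^sub>v d) = 0"
  unfolding cI_def by (rule L2_set_0') (simp add: scalar_prod_def)

lemma main_induct: "inv_upto T \<and> (\<forall>j\<le>T. 0 < sig j) \<and> (1 \<le> T \<longrightarrow> hh T \<le> KK T)"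
proof (induction T)
  case 0
  have "0 < sig 0" using X0(2) cos_sig[of 0] unfolding U1_def by simp
  then show ?case unfolding inv_upto_def by auto
next
  case (Suc T)
  let ?T = "Suc T"
  have invT: "inv_upto (?T - 1)" using Suc by simp
  have spT: "\<And>j. j < ?T \<Longrightarrow> 0 < sig j" using Suc by auto
  have T1: "1 \<le> ?T" by simp
  have Rc: "R ?T \<in> carrier_mat k k" using R_carrier by simp
  have Rinv: "minv (R ?T) \<in> carrier_mat k k \<and> R ?T * minv (R ?T) = 1\<^sub>m k \<and> minv (R ?T) * R ?T = 1\<^sub>m k"
  proof (rule inv_exists[OF Rc])
    fix v :: "real vec" assume v: "v \<in> carrier_vec k" "v \<noteq> 0\<^sub>v k"
    show "R ?T *\<^sub>v v \<noteq> 0\<^sub>v k"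
    proof
      assume z: "R ?T *\<^sub>v v = 0\<^sub>v k"
      have "0 < cI (X ?T *\<^sub>v (R ?T *\<^sub>v v))" by (rule per_vector(1)[OF T1 v invT spT])
      moreover have "X ?T *\<^sub>v (R ?T *\<^sub>v v) = 0\<^sub>v d" unfolding z using X_carrier[of ?T] by auto
      ultimately show False using cI_zero by simp
    qed
  qed
  have invT': "inv_upto ?T" using Suc Rinv unfolding inv_upto_def by (auto simp: le_Suc_eq)
  have K0: "0 \<le> KK ?T" by (rule KK_nonneg)
  have lowK: "1 / sqrt (1 + (KK ?T)\<^sup>2) \<le> sig ?T"
    unfolding sig_def
  proof (rule sigma_ge)
    show "0 < dim_col (transpose_mat U1 * X ?T)" using X_dims dk by simp
  next
    fix y assume y: "y \<in> carrier_vec (dim_col (transpose_mat U1 * X ?T))" "vnorm y = 1"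
    then have yk: "y \<in> carrier_vec k" using X_dims by simp
    define v where "v = minv (R ?T) *\<^sub>v y"
    have Ri1: "minv (R ?T) \<in> carrier_mat k k" using Rinv by blast
    have vc: "v \<in> carrier_vec k" unfolding v_def using mult_mat_vec_carrier[OF Ri1 yk] .
    have Rv: "R ?T *\<^sub>v v = y"
    proof -
      have "R ?T *\<^sub>v v = (R ?T * minv (R ?T)) *\<^sub>v y"
        unfolding v_def using Rc Ri1 yk by (intro assoc_mult_mat_vec[symmetric]) auto
      also have "\<dots> = y" using Rinv yk by simp
      finally show ?thesis .
    qed
    have vnz: "v \<noteq> 0\<^sub>v k"
    proof
      assume "v = 0\<^sub>v k"
      then have "y = 0\<^sub>v k" using Rv Rc by auto
      then show False using y(2) vnorm_zero_iff[of y] by simp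
    qed
    have B: "cJ (X ?T *\<^sub>v y) \<le> KK ?T * cI (X ?T *\<^sub>v y)"
      using per_vector(2)[OF T1 vc vnz invT spT] unfolding Rv .
    have S: "(cI (X ?T *\<^sub>v y))\<^sup>2 + (cJ (X ?T *\<^sub>v y))\<^sup>2 = 1" using Xy_split[OF yk] y(2) by simp
    have "1 / sqrt (1 + (KK ?T)\<^sup>2) \<le> cI (X ?T *\<^sub>v y)"
      by (rule sigma_from_K[OF _ K0 S B]) (simp_all add: cI_def cJ_def)
    then show "1 / sqrt (1 + (KK ?T)\<^sup>2) \<le> vnorm ((transpose_mat U1 * X ?T) *\<^sub>v y)"
      using G_vec[OF yk] by simp
  qed
  note TS = tan_from_sigma[OF K0 lowK sig_range(2)]
  have "0 < sig ?T" by (rule TS(1))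
  then have "\<forall>j\<le>?T. 0 < sig j" using Suc by (auto simp: le_Suc_eq)
  moreover have "hh ?T \<le> KK ?T" unfolding hh_sig by (rule TS(2))
  ultimately show ?case using invT' by simp
qed

end

theorem lemma6:
  fixes d k :: nat and eps beta :: real
    and A :: "real mat" and lam :: "nat \<Rightarrow> real" and u :: "nat \<Rightarrow> real vec"
    and X R :: "nat \<Rightarrow> real mat" and Xi :: "nat \<Rightarrow> real mat"
  assumes dk: "d > k" "k \<ge> 1"
    and eps: "0 < eps" "eps < 1"
    and A: "A \<in> carrier_mat d d" "transpose_mat A = A"
    and psd: "\<forall>x \<in> carrier_vec d. x \<bullet> (A *\<^sub>v x) \<ge> 0"
    and eig_sorted: "\<forall>i j. 1 \<le> i \<and> i \<le> j \<and> j \<le> d \<longrightarrow> lam j \<le> lam i"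
    and eig_nonneg: "lam d \<ge> 0"
    and eigvec: "\<forall>i. 1 \<le> i \<and> i \<le> d \<longrightarrow> u i \<in> carrier_vec d \<and> A *\<^sub>v u i = lam i \<cdot>\<^sub>v u i"
    and orthonormal: "\<forall>i j. 1 \<le> i \<and> i \<le> d \<and> 1 \<le> j \<and> j \<le> d \<longrightarrow>
                         u i \<bullet> u j = (if i = j then 1 else 0)"
    and gap: "lam k > lam (k+1)"
    and beta: "beta > 0" "lam k > 2 * sqrt beta" "2 * sqrt beta \<ge> lam (k+1)"
    and X0: "X 0 \<in> stiefel d k" "cos (theta_k (cols_mat d u 0 k) (X 0)) > 0"
    and Xi_carrier: "\<forall>t. Xi t \<in> carrier_mat d k"
    and pert1: "\<forall>t. opnorm2 (transpose_mat (cols_mat d u k (d - k)) * Xi t)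
                      \<le> (1/32) * (lam k - 2 * sqrt beta) * eps"
    and pert2: "\<forall>t. opnorm2 (transpose_mat (cols_mat d u 0 k) * Xi t)
                      \<le> (1/32) * (lam k - 2 * sqrt beta) * cos (theta_k (cols_mat d u 0 k) (X t))"
    and step1: "is_QR d k ((1/2) \<cdot>\<^sub>m (A * X 0) + Xi 0) (X 1) (R 1)"
    and step: "\<forall>t\<ge>1. is_QR d k (A * X t - beta \<cdot>\<^sub>m (X (t - 1) * minv (R t)) + Xi t)
                         (X (t + 1)) (R (t + 1))"
  shows "let c = (1/32::real);
             lamp = (lam k + sqrt ((lam k)\<^sup>2 - 4 * beta)) / 2;
             Delta = (lam k - 2 * sqrt beta) / lam k;
             gamma = sqrt beta / ((1 - c) * lamp + c * sqrt beta);
             eta = (2/15) * Delta * eps;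
             h = (\<lambda>t. tan (theta_k (cols_mat d u 0 k) (X t)))
         in 0 \<le> gamma \<and> gamma < 1 \<and>
            (\<forall>t\<ge>1. h t \<le> (31/15) * gamma ^ t * h 0
                 + eta * (\<Sum>s<t. (real s + 1) * gamma ^ s * (1 + h (t - 1 - s))))"
  proof -
  interpret anpm d k eps beta A lam u X R Xi
    by (rule anpm.intro) (fact assms)+
  have H: "\<forall>t\<ge>1. hh t \<le> KK t" using main_induct by blast
  show ?thesis unfolding Let_def
    using gam_facts H unfolding gam_def KK_def eta_def hh_def U1_def by simp
qed

end
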